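(* Consider the impulsive system $\dot S=S(A-S)-\beta_0 IS$, $\dot I=\beta_0 IS-(\sigma+g)I$ for $t\neq nT$, $S(nT)=(1-p)S(nT^-)$, $I(nT)=I(nT^-)$, with $A>S_c$, and set $$T_1(p)=\frac{|\ln(1-p)|}{A},\qquad T_2(p)=\frac{|\ln(1-p)|}{A-S_c}.$$ For $p>0$: (1) if $T<T_1(p)$, there are no non-trivial periodic solutions and the trivial equilibrium $(0,0)$ is stable; (2) if $T_1(p)<T<T_2(p)$, the disease-free periodic solution $(\mathcal{S},0)$ is stable and $(0,0)$ is unstable; (3) if $T>T_2(p)$, both $(\mathcal{S},0)$ and $(0,0)$ are unstable.
   Context: Parameters: $A\in(0,1]$, $\beta_0>0$, $\sigma,g\ge0$ with $\sigma+g>0$, $p\in(0,1)$, $T>0$; $S_c=(\sigma+g)/\beta_0$; it is assumed $S(t)\le A$. $\mathcal{S}$ is the $T$-periodic function given for $nT\le t<(n+1)T$ by $\mathcal{S}(t)=\frac{A[e^{AT}(1-p)-1]}{e^{AT}(1-p)-1+pe^{A(T-(t-nT))}}$. Stability of a $T$-periodic solution through $x_0$: for every neighbourhood $V$ of $x_0$ there is a neighbourhood $W\subset V$ with $\varphi(kT,y_0)\in V$ for all $y_0\in W$, $k\in\mathbb{N}$; unstable means not stable. *)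

theory Defs
  imports "HOL-Analysis.Analysis"
begin

text \<open>Solutions are
  right-continuous and considered on [0, \<infinity>).\<close>

definition Sc :: "real \<Rightarrow> real \<Rightarrow> real \<Rightarrow> real" where
  "Sc beta0 sg g = (sg + g) / beta0"

definition vfield :: "real \<Rightarrow> real \<Rightarrow> real \<Rightarrow> real \<Rightarrow> real \<times> real \<Rightarrow> real \<times> real" where
  "vfield A beta0 sg g x =
     (fst x * (A - fst x) - beta0 * snd x * fst x,
      beta0 * snd x * fst x - (sg + g) * snd x)"

definition phase_dom :: "real \<Rightarrow> (real \<times> real) set" where
  "phase_dom A = {x. 0 \<le> fst x \<and> fst x \<le> A \<and> 0 \<le> snd x}"

definition is_solution ::
  "real \<Rightarrow> real \<Rightarrow> real \<Rightarrow> real \<Rightarrow> real \<Rightarrow> real \<Rightarrow> (real \<Rightarrow> real \<times> real) \<Rightarrow> bool" where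
  "is_solution A beta0 sg g p T x \<longleftrightarrow>
     (\<forall>n::nat. \<forall>t. real n * T < t \<and> t < real (Suc n) * T \<longrightarrow>
        (x has_vector_derivative vfield A beta0 sg g (x t)) (at t)) \<and>
     (\<forall>n::nat. (x \<longlongrightarrow> x (real n * T)) (at_right (real n * T))) \<and>
     (\<forall>n::nat. n \<ge> 1 \<longrightarrow> (\<exists>L. (x \<longlongrightarrow> L) (at_left (real n * T)) \<and>
        x (real n * T) = ((1 - p) * fst L, snd L)))"

definition is_T_periodic :: "real \<Rightarrow> (real \<Rightarrow> real \<times> real) \<Rightarrow> bool" where
  "is_T_periodic T x \<longleftrightarrow> (\<forall>t\<ge>0. x (t + T) = x t)"

definition nbhd :: "real \<Rightarrow> real \<times> real \<Rightarrow> (real \<times> real) set \<Rightarrow> bool" where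
  "nbhd A x0 V \<longleftrightarrow> V \<subseteq> phase_dom A \<and>
     (\<exists>U. openin (top_of_set (phase_dom A)) U \<and> x0 \<in> U \<and> U \<subseteq> V)"

definition is_stable ::
  "real \<Rightarrow> real \<Rightarrow> real \<Rightarrow> real \<Rightarrow> real \<Rightarrow> real \<Rightarrow> real \<times> real \<Rightarrow> bool" where
  "is_stable A beta0 sg g p T x0 \<longleftrightarrow>
     (\<forall>V. nbhd A x0 V \<longrightarrow>
        (\<exists>W. nbhd A x0 W \<and> W \<subseteq> V \<and>
           (\<forall>x. is_solution A beta0 sg g p T x \<and> x 0 \<in> W \<longrightarrow>
              (\<forall>k::nat. x (real k * T) \<in> V))))"

definition calS :: "real \<Rightarrow> real \<Rightarrow> real \<Rightarrow> real \<Rightarrow> real" where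
  "calS A p T t =
     (let n = \<lfloor>t / T\<rfloor> in
      A * (exp (A * T) * (1 - p) - 1) /
        (exp (A * T) * (1 - p) - 1 + p * exp (A * (T - (t - real_of_int n * T)))))"

definition T1 :: "real \<Rightarrow> real \<Rightarrow> real" where
  "T1 A p = \<bar>ln (1 - p)\<bar> / A"

definition T2 :: "real \<Rightarrow> real \<Rightarrow> real \<Rightarrow> real \<Rightarrow> real \<Rightarrow> real" where
  "T2 A beta0 sg g p = \<bar>ln (1 - p)\<bar> / (A - Sc beta0 sg g)"

end

theory Submission
  imports Defs
begin


lemma mono_deriv:
  fixes f f' :: "real \<Rightarrow> real"
  assumes "continuous_on {a..b} f"
    and "\<And>t. a < t \<Longrightarrow> t < b \<Longrightarrow> (f has_real_derivative f' t) (at t)"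
    and "\<And>t. a < t \<Longrightarrow> t < b \<Longrightarrow> f' t \<ge> 0"
    and "a \<le> u" "u \<le> v" "v \<le> b"
  shows "f u \<le> f v"
proof -
  have "continuous_on {u..v} f" using assms(1) by (rule continuous_on_subset) (use assms in auto)
  show ?thesis
    by (rule DERIV_nonneg_imp_increasing_open[OF assms(5) _ \<open>continuous_on {u..v} f\<close>])
       (use assms in \<open>force\<close>)
qed

lemma lin_ge:
  fixes g g' :: "real \<Rightarrow> real"
  assumes "continuous_on {a..b} g"
    and "\<And>t. a < t \<Longrightarrow> t < b \<Longrightarrow> (g has_real_derivative g' t) (at t)"
    and "\<And>t. a < t \<Longrightarrow> t < b \<Longrightarrow> g' t \<ge> lam * g t"
    and "a \<le> t" "t \<le> b"
  shows "g t \<ge> g a * exp (lam * (t - a))"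
proof -
  define f where "f s = g s * exp (- lam * (s - a))" for s
  have "f a \<le> f t"
  proof (rule mono_deriv[where a=a and b=b and f=f and u=a and v=t and f'="\<lambda>s. (g' s - lam * g s) * exp (- lam * (s - a))"])
    show "continuous_on {a..b} f" unfolding f_def[abs_def]
      by (auto intro!: continuous_intros assms(1))
    fix s assume s: "a < s" "s < b"
    show "(f has_real_derivative (g' s - lam * g s) * exp (- lam * (s - a))) (at s)"
    proof -
      have e: "((\<lambda>s. exp (- lam * (s - a))) has_real_derivative exp (- lam * (s - a)) * (- lam)) (at s)"
        by (auto intro!: derivative_eq_intros)
      show ?thesis unfolding f_def[abs_def]
        by (rule DERIV_cong[OF DERIV_mult[OF assms(2)[OF s] e]]) (simp add: algebra_simps)
    qed
    show "(g' s - lam * g s) * exp (- lam * (s - a)) \<ge> 0" using assms(3)[OF s] by simp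
  qed (use assms in auto)
  then have "g a \<le> g t * exp (- lam * (t - a))" by (simp add: f_def)
  then have "g a * exp (lam * (t - a)) \<le> g t * exp (- lam * (t - a)) * exp (lam * (t - a))"
    by (simp add: mult_right_mono)
  also have "\<dots> = g t" by (simp add: mult.assoc flip: exp_add)
  finally show ?thesis .
qed

lemma lin_le:
  fixes g g' :: "real \<Rightarrow> real"
  assumes "continuous_on {a..b} g"
    and "\<And>t. a < t \<Longrightarrow> t < b \<Longrightarrow> (g has_real_derivative g' t) (at t)"
    and "\<And>t. a < t \<Longrightarrow> t < b \<Longrightarrow> g' t \<le> lam * g t"
    and "a \<le> t" "t \<le> b"
  shows "g t \<le> g a * exp (lam * (t - a))"
proof -
  have "- g t \<ge> - g a * exp (lam * (t - a))"
    by (rule lin_ge[where g="\<lambda>s. - g s" and g'="\<lambda>s. - g' s" and b=b])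
       (use assms in \<open>auto intro!: continuous_intros derivative_eq_intros\<close>)
  then show ?thesis by simp
qed



lemma sq_ode:
  fixes u h :: "real \<Rightarrow> real"
  assumes cont: "continuous_on {a..e} u"
    and der: "\<And>t. a < t \<Longrightarrow> t < e \<Longrightarrow> (u has_real_derivative u t * h t) (at t)"
    and bd: "\<And>t. a < t \<Longrightarrow> t < e \<Longrightarrow> \<bar>h t\<bar> \<le> K"
    and t: "a \<le> t" "t \<le> e"
  shows "u t * u t \<le> u a * u a * exp (2 * K * (t - a))"
    and "u t * u t \<ge> u a * u a * exp (- 2 * K * (t - a))"
proof -
  have c2: "continuous_on {a..e} (\<lambda>t. u t * u t)" by (intro continuous_intros cont)
  have d2: "((\<lambda>t. u t * u t) has_real_derivative 2 * (u s * u s) * h s) (at s)" if "a < s" "s < e" for s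
    by (rule DERIV_cong[OF DERIV_mult[OF der[OF that] der[OF that]]]) (simp add: algebra_simps)
  have sq: "0 \<le> u s * u s" for s by simp
  show "u t * u t \<le> u a * u a * exp (2 * K * (t - a))"
  proof (rule lin_le[OF c2 d2 _ t])
    fix s assume s: "a < s" "s < e"
    have "h s \<le> K" using bd[OF s] by simp
    then show "2 * (u s * u s) * h s \<le> 2 * K * (u s * u s)"
      using mult_left_mono[OF \<open>h s \<le> K\<close> sq[of s]] by (simp add: algebra_simps)
  qed
  show "u t * u t \<ge> u a * u a * exp (- 2 * K * (t - a))"
  proof (rule lin_ge[OF c2 d2 _ t])
    fix s assume s: "a < s" "s < e"
    have "- K \<le> h s" using bd[OF s] by simp
    then show "2 * (u s * u s) * h s \<ge> - 2 * K * (u s * u s)"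
      using mult_left_mono[OF \<open>- K \<le> h s\<close> sq[of s]] by (simp add: algebra_simps)
  qed
qed

lemma mult_ode_zero:
  fixes u h :: "real \<Rightarrow> real"
  assumes cont: "continuous_on {a..e} u"
    and der: "\<And>t. a < t \<Longrightarrow> t < e \<Longrightarrow> (u has_real_derivative u t * h t) (at t)"
    and bd: "\<And>t. a < t \<Longrightarrow> t < e \<Longrightarrow> \<bar>h t\<bar> \<le> K"
    and z: "u a = 0" and t: "a \<le> t" "t \<le> e"
  shows "u t = 0"
  using sq_ode(1)[OF cont der bd t] z
  by (metis linorder_not_le mult_eq_0_iff mult_zero_left not_square_less_zero order_antisym)

lemma mult_ode_pos:
  fixes u h :: "real \<Rightarrow> real"
  assumes cont: "continuous_on {a..e} u"
    and der: "\<And>t. a < t \<Longrightarrow> t < e \<Longrightarrow> (u has_real_derivative u t * h t) (at t)"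
    and bd: "\<And>t. a < t \<Longrightarrow> t < e \<Longrightarrow> \<bar>h t\<bar> \<le> K"
    and z: "u a > 0" and t: "a \<le> t" "t \<le> e"
  shows "u t > 0"
proof -
  have nz: "u s \<noteq> 0" if "a \<le> s" "s \<le> e" for s
  proof
    assume "u s = 0"
    have "u s * u s \<ge> u a * u a * exp (- 2 * K * (s - a))"
      by (rule sq_ode(2)[OF cont der bd that])
    moreover have "u a * u a * exp (- 2 * K * (s - a)) > 0" using z by simp
    ultimately show False using \<open>u s = 0\<close> by simp
  qed
  show ?thesis
  proof (rule ccontr)
    assume "\<not> u t > 0"
    then have "u t \<le> 0" by simp
    have "continuous_on {a..t} u" using cont by (rule continuous_on_subset) (use t in auto)
    from IVT2'[of u t 0 a, OF \<open>u t \<le> 0\<close> _ t(1) this] z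
    obtain s where "a \<le> s" "s \<le> t" "u s = 0" by auto
    with nz[of s] t show False by auto
  qed
qed

lemma vd_fst: "(y has_vector_derivative v) F \<Longrightarrow> ((\<lambda>t. fst (y t)) has_real_derivative fst v) F"
  unfolding has_vector_derivative_def has_field_derivative_def
  by (drule has_derivative_fst) (simp add: mult.commute[of _ "fst v"] mult_commute_abs)

lemma vd_snd: "(y has_vector_derivative v) F \<Longrightarrow> ((\<lambda>t. snd (y t)) has_real_derivative snd v) F"
  unfolding has_vector_derivative_def has_field_derivative_def
  by (drule has_derivative_snd) (simp add: mult.commute[of _ "snd v"] mult_commute_abs)



locale SI =
  fixes A b sg g p T :: real
  assumes A: "0 < A" and b: "0 < b" and sg: "0 \<le> sg" and gg: "0 \<le> g" and c: "0 < sg + g"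
    and p0: "0 < p" and p1: "p < 1" and T: "0 < T"
begin

abbreviation "cc \<equiv> sg + g"

definition segsol :: "real \<Rightarrow> real \<Rightarrow> (real \<Rightarrow> real \<times> real) \<Rightarrow> bool" where
  "segsol a e y \<longleftrightarrow> continuous_on {a..e} y \<and>
     (\<forall>t. a < t \<and> t < e \<longrightarrow> (y has_vector_derivative vfield A b sg g (y t)) (at t))"

lemma seg:
  assumes "is_solution A b sg g p T x"
  obtains y where "segsol (real n * T) (real (Suc n) * T) y"
    "\<And>t. real n * T \<le> t \<Longrightarrow> t < real (Suc n) * T \<Longrightarrow> y t = x t"
    "x (real (Suc n) * T) = ((1 - p) * fst (y (real (Suc n) * T)), snd (y (real (Suc n) * T)))"
proof -
  define a where "a = real n * T"
  define e where "e = real (Suc n) * T"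
  have ae: "a < e" using T by (simp add: a_def e_def algebra_simps)
  from assms obtain L where L: "(x \<longlongrightarrow> L) (at_left e)" "x e = ((1 - p) * fst L, snd L)"
  proof -
    have "1 \<le> Suc n" by simp
    then show ?thesis using assms that unfolding is_solution_def e_def by blast
  qed
  have ra: "(x \<longlongrightarrow> x a) (at_right a)" using assms unfolding is_solution_def a_def by blast
  have dx: "(x has_vector_derivative vfield A b sg g (x t)) (at t)" if "a < t" "t < e" for t
    using assms that unfolding is_solution_def a_def e_def by blast
  define y where "y t = (if t < e then x t else L)" for t
  have yx: "y t = x t" if "t < e" for t using that by (simp add: y_def)
  have ev_r: "eventually (\<lambda>t. x t = y t) (at_right a)"
    unfolding eventually_at_right_field using ae by (auto intro!: exI[of _ e] simp: yx)
  have ev_l: "eventually (\<lambda>t. x t = y t) (at_left e)"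
    unfolding eventually_at_left_field using ae by (auto intro!: exI[of _ a] simp: yx)
  have "continuous_on {a..e} y"
  proof (rule continuous_on_IccI[OF _ _ _ ae])
    show "(y \<longlongrightarrow> y a) (at_right a)"
      using tendsto_cong[OF ev_r] ra yx[OF ae] by simp
    show "(y \<longlongrightarrow> y e) (at_left e)"
    proof -
      have "y e = L" by (simp add: y_def)
      then show ?thesis using tendsto_cong[OF ev_l] L(1) by simp
    qed
    fix t assume t: "a < t" "t < e"
    have "isCont x t" using has_vector_derivative_continuous[OF dx[OF t]] .
    then have "(x \<longlongrightarrow> y t) (at t)" using t by (simp add: isCont_def yx)
    then show "(y \<longlongrightarrow> y t) (at t)"
      by (rule Lim_transform_within_open[where s="{..<e}"]) (use t in \<open>auto simp: yx\<close>)
  qed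
  moreover have "(y has_vector_derivative vfield A b sg g (y t)) (at t)" if t: "a < t" "t < e" for t
    using has_vector_derivative_transform_within_open[OF dx[OF t], of "{..<e}" y] t
    by (auto simp: yx)
  ultimately have "segsol a e y" unfolding segsol_def by blast
  moreover have "x e = ((1 - p) * fst (y e), snd (y e))" using L(2) by (simp add: y_def)
  ultimately show ?thesis using that[of y] yx unfolding a_def e_def by blast
qed

context
  fixes a e y
  assumes ss: "segsol a e y" and ae: "a < e"
begin

abbreviation "s t \<equiv> fst (y t)"
abbreviation "i t \<equiv> snd (y t)"

lemma cont_s: "continuous_on {a..e} (\<lambda>t. s t)"
  using ss unfolding segsol_def by (intro continuous_intros) auto
lemma cont_i: "continuous_on {a..e} (\<lambda>t. i t)"
  using ss unfolding segsol_def by (intro continuous_intros) auto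

lemma der_s: "a < t \<Longrightarrow> t < e \<Longrightarrow> ((\<lambda>t. s t) has_real_derivative s t * (A - s t - b * i t)) (at t)"
  using vd_fst[of y "vfield A b sg g (y t)" "at t"] ss unfolding segsol_def vfield_def
  by (auto simp: algebra_simps)
lemma der_i: "a < t \<Longrightarrow> t < e \<Longrightarrow> ((\<lambda>t. i t) has_real_derivative i t * (b * s t - cc)) (at t)"
  using vd_snd[of y "vfield A b sg g (y t)" "at t"] ss unfolding segsol_def vfield_def
  by (auto simp: algebra_simps)

lemma bnd: obtains H where "H \<ge> 0" "\<And>t. a \<le> t \<Longrightarrow> t \<le> e \<Longrightarrow> \<bar>s t\<bar> \<le> H \<and> \<bar>i t\<bar> \<le> H"
proof -
  have "compact (y ` {a..e})" using ss unfolding segsol_def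
    by (intro compact_continuous_image) auto
  then obtain H where H: "\<forall>z\<in>y ` {a..e}. norm z \<le> H" using compact_imp_bounded bounded_iff by metis
  have "\<bar>s t\<bar> \<le> H \<and> \<bar>i t\<bar> \<le> H" if "a \<le> t" "t \<le> e" for t
    using H that norm_fst_le[of "s t" "i t"] norm_snd_le[of "i t" "s t"] by force
  moreover have "H \<ge> 0" using H ae by (metis atLeastAtMost_iff image_eqI norm_ge_zero order.trans less_imp_le order_refl)
  ultimately show ?thesis using that by blast
qed

lemma s_zero: "s a = 0 \<Longrightarrow> a \<le> t \<Longrightarrow> t \<le> e \<Longrightarrow> s t = 0"
proof -
  assume "s a = 0" "a \<le> t" "t \<le> e"
  obtain H where H: "H \<ge> 0" "\<And>t. a \<le> t \<Longrightarrow> t \<le> e \<Longrightarrow> \<bar>s t\<bar> \<le> H \<and> \<bar>i t\<bar> \<le> H" using bnd by blast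
  show "s t = 0"
  proof (rule mult_ode_zero[OF cont_s der_s _ \<open>s a = 0\<close> \<open>a \<le> t\<close> \<open>t \<le> e\<close>])
    fix t assume "a < t" "t < e"
    with H(2)[of t] have "\<bar>s t\<bar> \<le> H" "\<bar>i t\<bar> \<le> H" by auto
    moreover have "\<bar>b * i t\<bar> \<le> b * H" using b \<open>\<bar>i t\<bar> \<le> H\<close> by (simp add: abs_mult)
    ultimately show "\<bar>A - s t - b * i t\<bar> \<le> A + H + b * H" using A by arith
  qed
qed

lemma bnd_h: obtains K where "\<And>t. a < t \<Longrightarrow> t < e \<Longrightarrow> \<bar>A - s t - b * i t\<bar> \<le> K \<and> \<bar>b * s t - cc\<bar> \<le> K"
proof -
  obtain H where H: "H \<ge> 0" "\<And>t. a \<le> t \<Longrightarrow> t \<le> e \<Longrightarrow> \<bar>s t\<bar> \<le> H \<and> \<bar>i t\<bar> \<le> H" using bnd by blast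
  have "\<bar>A - s t - b * i t\<bar> \<le> A + H + b * H + cc \<and> \<bar>b * s t - cc\<bar> \<le> A + H + b * H + cc"
    if "a < t" "t < e" for t
  proof -
    from H(2)[of t] that have "\<bar>s t\<bar> \<le> H" "\<bar>i t\<bar> \<le> H" by auto
    moreover have "\<bar>b * i t\<bar> \<le> b * H" using b \<open>\<bar>i t\<bar> \<le> H\<close> by (simp add: abs_mult)
    moreover have "\<bar>b * s t\<bar> \<le> b * H" using b \<open>\<bar>s t\<bar> \<le> H\<close> by (simp add: abs_mult)
    ultimately show ?thesis using A c H(1) b by arith
  qed
  then show ?thesis using that by blast
qed

lemma s_pos: "s a > 0 \<Longrightarrow> a \<le> t \<Longrightarrow> t \<le> e \<Longrightarrow> s t > 0"
proof -
  obtain K where K: "\<And>t. a < t \<Longrightarrow> t < e \<Longrightarrow> \<bar>A - s t - b * i t\<bar> \<le> K \<and> \<bar>b * s t - cc\<bar> \<le> K"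
    using bnd_h by blast
  assume "s a > 0" "a \<le> t" "t \<le> e"
  then show "s t > 0" using mult_ode_pos[OF cont_s der_s, of K] K by blast
qed

lemma i_pos: "i a > 0 \<Longrightarrow> a \<le> t \<Longrightarrow> t \<le> e \<Longrightarrow> i t > 0"
proof -
  obtain K where K: "\<And>t. a < t \<Longrightarrow> t < e \<Longrightarrow> \<bar>A - s t - b * i t\<bar> \<le> K \<and> \<bar>b * s t - cc\<bar> \<le> K"
    using bnd_h by blast
  assume "i a > 0" "a \<le> t" "t \<le> e"
  then show "i t > 0" using mult_ode_pos[OF cont_i der_i, of K] K by blast
qed

lemma i_zero: "i a = 0 \<Longrightarrow> a \<le> t \<Longrightarrow> t \<le> e \<Longrightarrow> i t = 0"
proof -
  obtain K where K: "\<And>t. a < t \<Longrightarrow> t < e \<Longrightarrow> \<bar>A - s t - b * i t\<bar> \<le> K \<and> \<bar>b * s t - cc\<bar> \<le> K"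
    using bnd_h by blast
  assume "i a = 0" "a \<le> t" "t \<le> e"
  then show "i t = 0" using mult_ode_zero[OF cont_i der_i, of K] K by blast
qed

lemma s_nonneg: "s a \<ge> 0 \<Longrightarrow> a \<le> t \<Longrightarrow> t \<le> e \<Longrightarrow> s t \<ge> 0"
  using s_pos s_zero by (cases "s a = 0") force+

lemma i_nonneg: "i a \<ge> 0 \<Longrightarrow> a \<le> t \<Longrightarrow> t \<le> e \<Longrightarrow> i t \<ge> 0"
  using i_pos i_zero by (cases "i a = 0") force+

lemma der_z: assumes "a < t" "t < e" "s t > 0"
  shows "((\<lambda>t. 1 / s t - k) has_real_derivative - (A - s t - b * i t) / s t) (at t)"
proof -
  have "((\<lambda>t. inverse (s t) - k) has_real_derivative
      - (s t * (A - s t - b * i t) * inverse (s t ^ Suc (Suc 0))) - 0) (at t)"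
    by (intro DERIV_diff DERIV_inverse_fun der_s assms DERIV_const) (use assms in auto)
  then have "((\<lambda>t. 1 / s t - k) has_real_derivative
      - (s t * (A - s t - b * i t) * inverse (s t ^ Suc (Suc 0))) - 0) (at t)"
    by (simp add: inverse_eq_divide)
  then show ?thesis by (rule DERIV_cong) (use assms(3) in \<open>simp add: field_simps\<close>)
qed

lemma z_lower:
  assumes "s a > 0" "i a \<ge> 0" "a \<le> t" "t \<le> e"
  shows "1 / s t - 1 / A \<ge> (1 / s a - 1 / A) * exp (- A * (t - a))"
proof (rule lin_ge[where g="\<lambda>t. 1 / s t - 1 / A", OF _ der_z _ assms(3,4)])
  show "continuous_on {a..e} (\<lambda>t. 1 / s t - 1 / A)"
    using s_pos[OF assms(1)] by (intro continuous_intros cont_s) force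
  fix t assume t: "a < t" "t < e"
  then show "s t > 0" using s_pos[OF assms(1)] by auto
  have "i t \<ge> 0" using i_nonneg[OF assms(2)] t by auto
  have "- (A - s t - b * i t) / s t = - A * (1 / s t - 1 / A) + b * i t / s t"
    using \<open>s t > 0\<close> A by (simp add: field_simps)
  moreover have "b * i t / s t \<ge> 0" using b \<open>i t \<ge> 0\<close> \<open>s t > 0\<close> by simp
  ultimately show "- (A - s t - b * i t) / s t \<ge> - A * (1 / s t - 1 / A)" by linarith
qed

lemma z_upper:
  assumes "s a > 0" "0 \<le> M" "b * M < A" "\<And>t. a < t \<Longrightarrow> t < e \<Longrightarrow> i t \<le> M" "a \<le> t" "t \<le> e"
  shows "1 / s t - 1 / (A - b * M) \<le> (1 / s a - 1 / (A - b * M)) * exp (- (A - b * M) * (t - a))"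
proof (rule lin_le[where g="\<lambda>t. 1 / s t - 1 / (A - b * M)", OF _ der_z _ assms(5,6)])
  show "continuous_on {a..e} (\<lambda>t. 1 / s t - 1 / (A - b * M))"
    using s_pos[OF assms(1)] by (intro continuous_intros cont_s) force
  fix t assume t: "a < t" "t < e"
  then show "s t > 0" using s_pos[OF assms(1)] by auto
  have "- (A - s t - b * i t) / s t = - (A - b * M) * (1 / s t - 1 / (A - b * M)) + b * (i t - M) / s t"
    using \<open>s t > 0\<close> assms(3) by (simp add: field_simps)
  moreover have "b * (i t - M) / s t \<le> 0" using b assms(4)[OF t] \<open>s t > 0\<close>
    by (simp add: divide_nonpos_pos mult_nonneg_nonpos)
  ultimately show "- (A - s t - b * i t) / s t \<le> - (A - b * M) * (1 / s t - 1 / (A - b * M))" by linarith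
qed

lemma s_le_A:
  assumes "s a \<ge> 0" "s a \<le> A" "i a \<ge> 0" "a \<le> t" "t \<le> e"
  shows "s t \<le> A"
proof (cases "s a = 0")
  case True then show ?thesis using s_zero assms A by auto
next
  case False
  then have sa: "s a > 0" using assms by auto
  have "1 / s a - 1 / A \<ge> 0" using assms sa A by (simp add: field_simps)
  then have "1 / s t - 1 / A \<ge> 0" using z_lower[OF sa assms(3,4,5)] by (smt (verit) exp_gt_zero mult_nonneg_nonneg)
  moreover have "s t > 0" using s_pos[OF sa assms(4,5)] .
  ultimately show ?thesis using A by (simp add: field_simps)
qed

lemma pd:
  assumes "y a \<in> phase_dom A" "a \<le> t" "t \<le> e"
  shows "y t \<in> phase_dom A"
  using assms s_nonneg[of t] i_nonneg[of t] s_le_A[of t] unfolding phase_dom_def by auto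

lemma i_upper:
  assumes "y a \<in> phase_dom A" "a \<le> t" "t \<le> e"
  shows "i t \<le> i a * exp (b * A * (t - a))"
proof (rule lin_le[OF cont_i der_i _ assms(2,3)])
  fix t assume t: "a < t" "t < e"
  have "y t \<in> phase_dom A" using pd[OF assms(1)] t by auto
  then have "i t \<ge> 0" "s t \<le> A" unfolding phase_dom_def by auto
  then have "b * s t - cc \<le> b * A" using b c sg gg by (smt (verit) mult_left_mono)
  then have "i t * (b * s t - cc) \<le> i t * (b * A)" using \<open>i t \<ge> 0\<close> by (rule mult_left_mono)
  then show "i t * (b * s t - cc) \<le> b * A * i t" by (simp add: algebra_simps)
qed

lemma i_mono:
  assumes "y a \<in> phase_dom A" "\<And>t. a < t \<Longrightarrow> t < e \<Longrightarrow> b * s t \<le> cc" "a \<le> t" "t \<le> e"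
  shows "i t \<le> i a"
proof -
  have "i t \<le> i a * exp (0 * (t - a))"
  proof (rule lin_le[OF cont_i der_i _ assms(3,4)])
    fix t assume t: "a < t" "t < e"
    have "y t \<in> phase_dom A" using pd[OF assms(1)] t by auto
    then have "i t \<ge> 0" unfolding phase_dom_def by auto
    then show "i t * (b * s t - cc) \<le> 0 * i t" using assms(2)[OF t] by (simp add: mult_nonneg_nonpos)
  qed
  then show ?thesis by simp
qed

lemma s_upper:
  assumes "y a \<in> phase_dom A" "a \<le> t" "t \<le> e"
  shows "s t \<le> s a * exp (A * (t - a))"
proof (rule lin_le[OF cont_s der_s _ assms(2,3)])
  fix t assume t: "a < t" "t < e"
  have "y t \<in> phase_dom A" using pd[OF assms(1)] t by auto
  then have "i t \<ge> 0" "s t \<ge> 0" unfolding phase_dom_def by auto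
  moreover have "b * i t \<ge> 0" using b \<open>i t \<ge> 0\<close> by simp
  ultimately have "A - s t - b * i t \<le> A" by linarith
  then have "s t * (A - s t - b * i t) \<le> s t * A" using \<open>s t \<ge> 0\<close> by (rule mult_left_mono)
  then show "s t * (A - s t - b * i t) \<le> A * s t" by (simp add: algebra_simps)
qed

lemma i_s0:
  assumes "s a = 0" "a \<le> t" "t \<le> e"
  shows "i t = i a * exp (- cc * (t - a))"
proof -
  have d: "i t * (b * s t - cc) = - cc * i t" if "a < t" "t < e" for t
    using s_zero[OF assms(1), of t] that by simp
  have "i t \<le> i a * exp (- cc * (t - a))"
  proof (rule lin_le[OF cont_i der_i _ assms(2,3)])
    fix t assume tt: "a < t" "t < e" then show "i t * (b * s t - cc) \<le> - cc * i t" using d[OF tt] by linarith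
  qed
  moreover have "i t \<ge> i a * exp (- cc * (t - a))"
  proof (rule lin_ge[OF cont_i der_i _ assms(2,3)])
    fix t assume tt: "a < t" "t < e" then show "i t * (b * s t - cc) \<ge> - cc * i t" using d[OF tt] by linarith
  qed
  ultimately show ?thesis by simp
qed

definition PP :: "real \<Rightarrow> real" where
  "PP t = i t * exp (b * ln (s t)) * exp (- (b * A - cc) * (t - a))"

lemma der_P: assumes "a < t" "t < e" "s t > 0"
  shows "(PP has_real_derivative - (b * b) * i t * PP t) (at t)"
proof -
  have e1: "((\<lambda>t. exp (b * ln (s t))) has_real_derivative
      exp (b * ln (s t)) * (b * (s t * (A - s t - b * i t) / s t))) (at t)"
    by (rule DERIV_cong[OF DERIV_fun_exp[OF DERIV_cmult[OF DERIV_chain2[OF DERIV_ln_divide[OF assms(3)] der_s[OF assms(1,2)]]]]])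
      simp
  have e2: "((\<lambda>t. exp (- (b * A - cc) * (t - a))) has_real_derivative
      exp (- (b * A - cc) * (t - a)) * (- (b * A - cc))) (at t)"
    by (auto intro!: derivative_eq_intros)
  have "(PP has_real_derivative
     (i t * (b * s t - cc) * exp (b * ln (s t)) + exp (b * ln (s t)) * (b * (s t * (A - s t - b * i t) / s t)) * i t)
       * exp (- (b * A - cc) * (t - a)) + exp (- (b * A - cc) * (t - a)) * (- (b * A - cc)) * (i t * exp (b * ln (s t)))) (at t)"
    unfolding PP_def[abs_def] by (intro DERIV_mult e1 e2 der_i assms(1,2))
  then show ?thesis
    by (rule DERIV_cong) (use assms(3) in \<open>simp add: PP_def field_simps\<close>)
qed

lemma P_mono:
  assumes "y a \<in> phase_dom A" "s a > 0" "a \<le> t" "t \<le> e"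
  shows "PP t \<le> PP a"
proof -
  have sp: "s t > 0" if "a \<le> t" "t \<le> e" for t using s_pos[OF assms(2) that] .
  have cP: "continuous_on {a..e} PP" unfolding PP_def[abs_def]
    using sp by (intro continuous_intros cont_s cont_i) force+
  have "PP t \<le> PP a * exp (0 * (t - a))"
  proof (rule lin_le[OF cP der_P _ assms(3,4)])
    fix t assume t: "a < t" "t < e"
    then show "s t > 0" using sp by auto
    have "y t \<in> phase_dom A" using pd[OF assms(1)] t by auto
    then have "i t \<ge> 0" unfolding phase_dom_def by auto
    then have "PP t \<ge> 0" unfolding PP_def by simp
    then show "- (b * b) * i t * PP t \<le> 0 * PP t" using \<open>i t \<ge> 0\<close>
      by (simp add: mult_nonneg_nonneg)
  qed
  then show ?thesis by simp
qed

lemma P_lower: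
  assumes "y a \<in> phase_dom A" "s a > 0" "\<And>t. a < t \<Longrightarrow> t < e \<Longrightarrow> i t \<le> M" "a \<le> t" "t \<le> e"
  shows "PP t \<ge> PP a * exp (- (b * b * M) * (t - a))"
proof -
  have sp: "s t > 0" if "a \<le> t" "t \<le> e" for t using s_pos[OF assms(2) that] .
  have cP: "continuous_on {a..e} PP" unfolding PP_def[abs_def]
    using sp by (intro continuous_intros cont_s cont_i) force+
  show ?thesis
  proof (rule lin_ge[OF cP der_P _ assms(4,5)])
    fix t assume t: "a < t" "t < e"
    then show "s t > 0" using sp by auto
    have "y t \<in> phase_dom A" using pd[OF assms(1)] t by auto
    then have "i t \<ge> 0" unfolding phase_dom_def by auto
    then have "PP t \<ge> 0" unfolding PP_def by simp
    have "b * b * i t * PP t \<le> b * b * M * PP t"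
      using assms(3)[OF t] \<open>PP t \<ge> 0\<close> b by (intro mult_right_mono mult_left_mono) auto
    then show "- (b * b) * i t * PP t \<ge> - (b * b * M) * PP t" by simp
  qed
qed

lemma P_mono':
  assumes "y a \<in> phase_dom A" "s a > 0" "a \<le> t" "t \<le> e"
  shows "i t * exp (b * ln (s t)) * exp (- (b * A - cc) * (t - a)) \<le> i a * exp (b * ln (s a))"
  using P_mono[OF assms] unfolding PP_def by simp

lemma P_lower':
  assumes "y a \<in> phase_dom A" "s a > 0" "\<And>t. a < t \<Longrightarrow> t < e \<Longrightarrow> i t \<le> M" "a \<le> t" "t \<le> e"
  shows "i t * exp (b * ln (s t)) * exp (- (b * A - cc) * (t - a)) \<ge> i a * exp (b * ln (s a)) * exp (- (b * b * M) * (t - a))"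
  using P_lower[OF assms] unfolding PP_def by simp

end

end



context SI begin

lemma segk:
  assumes "is_solution A b sg g p T x"
  obtains y where "segsol (real k * T) (real (Suc k) * T) y" "real k * T < real (Suc k) * T"
    "y (real k * T) = x (real k * T)"
    "\<And>t. real k * T \<le> t \<Longrightarrow> t < real (Suc k) * T \<Longrightarrow> y t = x t"
    "x (real (Suc k) * T) = ((1 - p) * fst (y (real (Suc k) * T)), snd (y (real (Suc k) * T)))"
    "real (Suc k) * T - real k * T = T"
proof -
  obtain y where y: "segsol (real k * T) (real (Suc k) * T) y"
    "\<And>t. real k * T \<le> t \<Longrightarrow> t < real (Suc k) * T \<Longrightarrow> y t = x t"
    "x (real (Suc k) * T) = ((1 - p) * fst (y (real (Suc k) * T)), snd (y (real (Suc k) * T)))"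
    using seg[OF assms] by blast
  have lt: "real k * T < real (Suc k) * T" using T by (simp add: algebra_simps)
  have "real (Suc k) * T - real k * T = T" by (simp add: algebra_simps)
  then show ?thesis using that[OF y(1) lt y(2)[OF order_refl lt] y(2) y(3)] by blast
qed

lemma step_pd:
  assumes "is_solution A b sg g p T x" "x (real k * T) \<in> phase_dom A"
  shows "x (real (Suc k) * T) \<in> phase_dom A"
    and "\<And>t. real k * T \<le> t \<Longrightarrow> t < real (Suc k) * T \<Longrightarrow> x t \<in> phase_dom A"
proof -
  obtain y where y: "segsol (real k * T) (real (Suc k) * T) y" "real k * T < real (Suc k) * T"
    "y (real k * T) = x (real k * T)"
    "\<And>t. real k * T \<le> t \<Longrightarrow> t < real (Suc k) * T \<Longrightarrow> y t = x t"
    "x (real (Suc k) * T) = ((1 - p) * fst (y (real (Suc k) * T)), snd (y (real (Suc k) * T)))"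
    using segk[OF assms(1)] by blast
  have "y (real (Suc k) * T) \<in> phase_dom A" using pd[OF y(1,2)] y(2,3) assms(2) by auto
  then show "x (real (Suc k) * T) \<in> phase_dom A" using y(5) p0 p1 A
    unfolding phase_dom_def by (auto simp: mult_le_cancel_right1 intro: order.trans[OF mult_left_le_one_le])
  fix t assume tt: "real k * T \<le> t" "t < real (Suc k) * T"
  have "y (real k * T) \<in> phase_dom A" using y(3) assms(2) by simp
  then have "y t \<in> phase_dom A" using pd[OF y(1,2)] tt by auto
  then show "x t \<in> phase_dom A" using y(4)[OF tt] by simp
qed

lemma sol_pd:
  assumes "is_solution A b sg g p T x" "x 0 \<in> phase_dom A"
  shows "x (real k * T) \<in> phase_dom A"
proof (induction k)
  case 0 then show ?case using assms by simp
next
  case (Suc k) then show ?case using step_pd(1)[OF assms(1)] by blast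
qed

lemma step_z_lower:
  assumes "is_solution A b sg g p T x" "x (real k * T) \<in> phase_dom A" "fst (x (real k * T)) > 0"
  shows "fst (x (real (Suc k) * T)) > 0"
    "1 / fst (x (real (Suc k) * T)) \<ge> (1 / A + (1 / fst (x (real k * T)) - 1 / A) * exp (- A * T)) / (1 - p)"
proof -
  obtain y where y: "segsol (real k * T) (real (Suc k) * T) y" "real k * T < real (Suc k) * T"
    "y (real k * T) = x (real k * T)"
    "\<And>t. real k * T \<le> t \<Longrightarrow> t < real (Suc k) * T \<Longrightarrow> y t = x t"
    "x (real (Suc k) * T) = ((1 - p) * fst (y (real (Suc k) * T)), snd (y (real (Suc k) * T)))"
    "real (Suc k) * T - real k * T = T"
    using segk[OF assms(1)] by blast
  let ?e = "real (Suc k) * T"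
  have ia: "snd (y (real k * T)) \<ge> 0" using assms(2) y(3) unfolding phase_dom_def by auto
  have sa: "fst (y (real k * T)) > 0" using assms(3) y(3) by simp
  have se: "fst (y ?e) > 0" using s_pos[OF y(1,2) sa] y(2) by simp
  then show "fst (x ?e) > 0" using y(5) p1 by simp
  have "1 / fst (y ?e) - 1 / A \<ge> (1 / fst (y (real k * T)) - 1 / A) * exp (- A * T)"
    using z_lower[OF y(1,2) sa ia, of ?e] y(2,6) by simp
  then have L: "1 / fst (y ?e) \<ge> 1 / A + (1 / fst (x (real k * T)) - 1 / A) * exp (- A * T)"
    using y(3) by simp
  have eq: "1 / fst (x ?e) = (1 / fst (y ?e)) / (1 - p)" using y(5) by simp
  show "1 / fst (x ?e) \<ge> (1 / A + (1 / fst (x (real k * T)) - 1 / A) * exp (- A * T)) / (1 - p)"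
    unfolding eq by (rule divide_right_mono[OF L]) (use p1 in simp)
qed

lemma step_z_upper:
  assumes "is_solution A b sg g p T x" "x (real k * T) \<in> phase_dom A" "fst (x (real k * T)) > 0"
    "0 \<le> M" "b * M < A" "\<And>t. real k * T < t \<Longrightarrow> t < real (Suc k) * T \<Longrightarrow> snd (x t) \<le> M"
  shows "1 / fst (x (real (Suc k) * T)) \<le> (1 / (A - b * M) + (1 / fst (x (real k * T)) - 1 / (A - b * M)) * exp (- (A - b * M) * T)) / (1 - p)"
proof -
  obtain y where y: "segsol (real k * T) (real (Suc k) * T) y" "real k * T < real (Suc k) * T"
    "y (real k * T) = x (real k * T)"
    "\<And>t. real k * T \<le> t \<Longrightarrow> t < real (Suc k) * T \<Longrightarrow> y t = x t"
    "x (real (Suc k) * T) = ((1 - p) * fst (y (real (Suc k) * T)), snd (y (real (Suc k) * T)))"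
    "real (Suc k) * T - real k * T = T"
    using segk[OF assms(1)] by blast
  let ?e = "real (Suc k) * T"
  have sa: "fst (y (real k * T)) > 0" using assms(3) y(3) by simp
  have "1 / fst (y ?e) - 1 / (A - b * M) \<le> (1 / fst (y (real k * T)) - 1 / (A - b * M)) * exp (- (A - b * M) * T)"
    using z_upper[OF y(1,2) sa assms(4,5), of ?e] y(2,6) assms(6) y(4) by fastforce
  then have L: "1 / fst (y ?e) \<le> 1 / (A - b * M) + (1 / fst (x (real k * T)) - 1 / (A - b * M)) * exp (- (A - b * M) * T)"
    using y(3) by simp
  have eq: "1 / fst (x ?e) = (1 / fst (y ?e)) / (1 - p)" using y(5) by simp
  show ?thesis unfolding eq by (rule divide_right_mono[OF L]) (use p1 in simp)
qed

lemma step_i_upper: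
  assumes "is_solution A b sg g p T x" "x (real k * T) \<in> phase_dom A"
    "real k * T \<le> t" "t < real (Suc k) * T"
  shows "snd (x t) \<le> snd (x (real k * T)) * exp (b * A * T)"
proof -
  obtain y where y: "segsol (real k * T) (real (Suc k) * T) y" "real k * T < real (Suc k) * T"
    "y (real k * T) = x (real k * T)"
    "\<And>t. real k * T \<le> t \<Longrightarrow> t < real (Suc k) * T \<Longrightarrow> y t = x t"
    "x (real (Suc k) * T) = ((1 - p) * fst (y (real (Suc k) * T)), snd (y (real (Suc k) * T)))"
    "real (Suc k) * T - real k * T = T"
    using segk[OF assms(1)] by blast
  have "snd (y t) \<le> snd (y (real k * T)) * exp (b * A * (t - real k * T))"
    using i_upper[OF y(1,2), of t] assms y(3) by simp
  also have "\<dots> \<le> snd (y (real k * T)) * exp (b * A * T)"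
  proof (rule mult_left_mono)
    show "exp (b * A * (t - real k * T)) \<le> exp (b * A * T)"
      using assms(4) y(6) A b by (simp add: mult_left_mono)
    show "snd (y (real k * T)) \<ge> 0" using assms(2) y(3) unfolding phase_dom_def by auto
  qed
  finally show ?thesis using y(3) y(4)[OF assms(3,4)] by simp
qed

abbreviation "mu \<equiv> (b * A - cc) * T + b * ln (1 - p)"

lemma step_P:
  assumes "is_solution A b sg g p T x" "x (real k * T) \<in> phase_dom A" "fst (x (real k * T)) > 0"
  shows "snd (x (real (Suc k) * T)) * exp (b * ln (fst (x (real (Suc k) * T))))
     \<le> exp mu * (snd (x (real k * T)) * exp (b * ln (fst (x (real k * T)))))"
    and "(\<And>t. real k * T < t \<Longrightarrow> t < real (Suc k) * T \<Longrightarrow> snd (x t) \<le> M) \<Longrightarrow>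
     snd (x (real (Suc k) * T)) * exp (b * ln (fst (x (real (Suc k) * T))))
     \<ge> exp (mu - b * b * M * T) * (snd (x (real k * T)) * exp (b * ln (fst (x (real k * T)))))"
proof -
  obtain y where y: "segsol (real k * T) (real (Suc k) * T) y" "real k * T < real (Suc k) * T"
    "y (real k * T) = x (real k * T)"
    "\<And>t. real k * T \<le> t \<Longrightarrow> t < real (Suc k) * T \<Longrightarrow> y t = x t"
    "x (real (Suc k) * T) = ((1 - p) * fst (y (real (Suc k) * T)), snd (y (real (Suc k) * T)))"
    "real (Suc k) * T - real k * T = T"
    using segk[OF assms(1)] by blast
  let ?e = "real (Suc k) * T"
  let ?a = "real k * T"
  have sa: "fst (y ?a) > 0" using assms(3) y(3) by simp
  have ya: "y ?a \<in> phase_dom A" using assms(2) y(3) by simp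
  have se: "fst (y ?e) > 0" using s_pos[OF y(1,2) sa] y(2) by simp
  have fx: "fst (x ?e) = (1 - p) * fst (y ?e)" using y(5) by simp
  have "ln (fst (x ?e)) = ln (1 - p) + ln (fst (y ?e))" unfolding fx using se p1 by (simp add: ln_mult)
  then have exe: "exp (b * ln (fst (x ?e))) = exp (b * ln (1 - p)) * exp (b * ln (fst (y ?e)))"
    by (simp add: distrib_left exp_add)
  have Q: "snd (x ?e) * exp (b * ln (fst (x ?e))) =
     exp (b * ln (1 - p)) * exp ((b * A - cc) * T) *
       (snd (y ?e) * exp (b * ln (fst (y ?e))) * exp (- (b * A - cc) * (?e - ?a)))"
  proof -
    have sx: "snd (x ?e) = snd (y ?e)" using y(5) by simp
    have one: "exp ((b * A - cc) * T) * exp (- (b * A - cc) * T) = 1" by (simp add: algebra_simps flip: exp_add)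
    have "exp (b * ln (1 - p)) * exp ((b * A - cc) * T) *
       (snd (y ?e) * exp (b * ln (fst (y ?e))) * exp (- (b * A - cc) * T))
      = exp (b * ln (1 - p)) * (snd (y ?e) * exp (b * ln (fst (y ?e)))) *
        (exp ((b * A - cc) * T) * exp (- (b * A - cc) * T))" (is "?L = ?R") by (simp only: mult_ac)
    note eq2 = this
    show ?thesis unfolding sx exe y(6) eq2 one by (simp only: mult_ac mult_1_right)
  qed
  have expmu: "exp mu = exp (b * ln (1 - p)) * exp ((b * A - cc) * T)"
    by (simp add: exp_add[symmetric] algebra_simps)
  have P0: "snd (y ?a) * exp (b * ln (fst (y ?a))) * exp (- (b * A - cc) * (?a - ?a)) = 
     snd (x ?a) * exp (b * ln (fst (x ?a)))" using y(3) by simp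
  have pos: "exp (b * ln (1 - p)) * exp ((b * A - cc) * T) \<ge> 0" by simp
  have "snd (y ?e) * exp (b * ln (fst (y ?e))) * exp (- (b * A - cc) * (?e - ?a))
     \<le> snd (y ?a) * exp (b * ln (fst (y ?a))) * exp (- (b * A - cc) * (?a - ?a))"
    using P_mono'[OF y(1,2) ya sa, of ?e] y(2) by simp
  then show "snd (x ?e) * exp (b * ln (fst (x ?e))) \<le> exp mu * (snd (x ?a) * exp (b * ln (fst (x ?a))))"
    unfolding Q expmu P0[symmetric] by (rule mult_left_mono[OF _ pos])
  assume M: "\<And>t. ?a < t \<Longrightarrow> t < ?e \<Longrightarrow> snd (x t) \<le> M"
  have "snd (y ?e) * exp (b * ln (fst (y ?e))) * exp (- (b * A - cc) * (?e - ?a))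
     \<ge> snd (y ?a) * exp (b * ln (fst (y ?a))) * exp (- (b * A - cc) * (?a - ?a)) * exp (- (b * b * M) * (?e - ?a))"
    using P_lower'[OF y(1,2) ya sa, of M ?e] y(2,4) M by force
  then have "snd (x ?e) * exp (b * ln (fst (x ?e))) \<ge> exp mu * 
      (snd (x ?a) * exp (b * ln (fst (x ?a))) * exp (- (b * b * M) * T))"
    unfolding Q expmu P0 y(6) by (rule mult_left_mono[OF _ pos])
  moreover have "exp (mu - b * b * M * T) = exp mu * exp (- (b * b * M) * T)"
  proof -
    have "mu - b * b * M * T = mu + (- (b * b * M) * T)" by simp
    then show ?thesis by (simp only: exp_add)
  qed
  ultimately show "snd (x ?e) * exp (b * ln (fst (x ?e))) \<ge> exp (mu - b * b * M * T) * (snd (x ?a) * exp (b * ln (fst (x ?a))))"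
    by (simp add: algebra_simps)
qed

lemma step_s0:
  assumes "is_solution A b sg g p T x" "fst (x (real k * T)) = 0"
  shows "fst (x (real (Suc k) * T)) = 0" "snd (x (real (Suc k) * T)) = snd (x (real k * T)) * exp (- cc * T)"
    "\<And>t. real k * T \<le> t \<Longrightarrow> t < real (Suc k) * T \<Longrightarrow> x t = (0, snd (x (real k * T)) * exp (- cc * (t - real k * T)))"
proof -
  obtain y where y: "segsol (real k * T) (real (Suc k) * T) y" "real k * T < real (Suc k) * T"
    "y (real k * T) = x (real k * T)"
    "\<And>t. real k * T \<le> t \<Longrightarrow> t < real (Suc k) * T \<Longrightarrow> y t = x t"
    "x (real (Suc k) * T) = ((1 - p) * fst (y (real (Suc k) * T)), snd (y (real (Suc k) * T)))"
    "real (Suc k) * T - real k * T = T"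
    using segk[OF assms(1)] by blast
  let ?e = "real (Suc k) * T"
  let ?a = "real k * T"
  have sa: "fst (y ?a) = 0" using assms(2) y(3) by simp
  show "fst (x ?e) = 0" using s_zero[OF y(1,2) sa, of ?e] y(2,5) by simp
  show "snd (x ?e) = snd (x ?a) * exp (- cc * T)" using i_s0[OF y(1,2) sa, of ?e] y(2,3,5,6) by simp
  fix t assume t: "?a \<le> t" "t < ?e"
  have "fst (y t) = 0" "snd (y t) = snd (y ?a) * exp (- cc * (t - ?a))"
    using s_zero[OF y(1,2) sa, of t] i_s0[OF y(1,2) sa, of t] t by auto
  then show "x t = (0, snd (x ?a) * exp (- cc * (t - ?a)))" using y(3) y(4)[OF t]
    by (metis prod.collapse)
qed

lemma step_small:
  assumes "is_solution A b sg g p T x" "x (real k * T) \<in> phase_dom A"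
    "b * (fst (x (real k * T)) * exp (A * T)) \<le> cc"
  shows "snd (x (real (Suc k) * T)) \<le> snd (x (real k * T))"
    "fst (x (real (Suc k) * T)) \<le> (1 - p) * exp (A * T) * fst (x (real k * T))"
proof -
  obtain y where y: "segsol (real k * T) (real (Suc k) * T) y" "real k * T < real (Suc k) * T"
    "y (real k * T) = x (real k * T)"
    "\<And>t. real k * T \<le> t \<Longrightarrow> t < real (Suc k) * T \<Longrightarrow> y t = x t"
    "x (real (Suc k) * T) = ((1 - p) * fst (y (real (Suc k) * T)), snd (y (real (Suc k) * T)))"
    "real (Suc k) * T - real k * T = T"
    using segk[OF assms(1)] by blast
  let ?e = "real (Suc k) * T"
  let ?a = "real k * T"
  have ya: "y ?a \<in> phase_dom A" using assms(2) y(3) by simp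
  have sup: "fst (y t) \<le> fst (y ?a) * exp (A * T)" if "?a \<le> t" "t \<le> ?e" for t
  proof -
    have "fst (y t) \<le> fst (y ?a) * exp (A * (t - ?a))" using s_upper[OF y(1,2) ya that] .
    also have "\<dots> \<le> fst (y ?a) * exp (A * T)"
      using that y(6) A ya unfolding phase_dom_def by (intro mult_left_mono) (auto simp: mult_left_mono)
    finally show ?thesis .
  qed
  have "snd (y ?e) \<le> snd (y ?a)"
  proof (rule i_mono[OF y(1,2) ya _ _ order_refl])
    fix t assume "?a < t" "t < ?e"
    then have "fst (y t) \<le> fst (x ?a) * exp (A * T)" using sup[of t] y(3) by simp
    then show "b * fst (y t) \<le> cc" using assms(3) b by (smt (verit) mult_left_mono)
  qed (use y(2) in auto)
  then show "snd (x ?e) \<le> snd (x ?a)" using y(3,5) by simp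
  have "fst (y ?e) \<le> fst (x ?a) * exp (A * T)" using sup[of ?e] y(2,3) by simp
  then have "(1 - p) * fst (y ?e) \<le> (1 - p) * (fst (x ?a) * exp (A * T))"
    using p1 by (intro mult_left_mono) auto
  moreover have "fst (x ?e) = (1 - p) * fst (y ?e)" using y(5) by simp
  ultimately show "fst (x ?e) \<le> (1 - p) * exp (A * T) * fst (x ?a)" by (simp add: algebra_simps)
qed

end



lemma clamp_real_in: "(0::real) \<le> T \<Longrightarrow> clamp 0 T t \<in> {0..T}"
  using clamp_in_interval[of 0 T t] by (simp add: cbox_interval)

lemma clamp_real_id: "t \<in> {0..T} \<Longrightarrow> clamp 0 T t = (t::real)"
  using clamp_cancel_cbox[of t 0 T] by (simp add: cbox_interval)

lemma int_cont:
  fixes h :: "real \<Rightarrow> real \<times> real"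
  assumes "continuous_on {0..T} h"
  shows "continuous_on {0..T} (\<lambda>u. integral {0..u} h)"
  unfolding continuous_on_eq_continuous_within
  using has_vector_derivative_continuous[OF integral_has_vector_derivative[OF assms]] by blast

lemma picard:
  fixes G :: "real \<times> real \<Rightarrow> real \<times> real" and L T :: real
  assumes L: "L > 0" and lip: "\<And>u v. dist (G u) (G v) \<le> L * dist u v" and T: "T > 0"
  shows "\<exists>y. continuous_on {0..T} y \<and> y 0 = x0 \<and>
     (\<forall>t. 0 < t \<and> t < T \<longrightarrow> (y has_vector_derivative G (y t)) (at t))"
proof -
  have contG: "continuous_on UNIV G"
    by (rule lipschitz_on_continuous_on[of L]) (auto simp: lipschitz_on_def lip L less_imp_le)
  define h where "h v r = G (exp (2 * L * r) *\<^sub>R apply_bcontfun v r)" for v :: "(real, real \<times> real) bcontfun" and r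
  have conth: "continuous_on S (h v)" for v S
    unfolding h_def by (rule continuous_on_compose2[OF contG]) (auto intro!: continuous_intros)
  define Fv where "Fv v t = exp (- 2 * L * t) *\<^sub>R (x0 + integral {0..t} (h v))" for v t
  have contF: "continuous_on {0..T} (Fv v)" for v
    unfolding Fv_def by (intro continuous_intros int_cont conth)
  have ex: "\<exists>g. \<forall>t. apply_bcontfun g t = Fv v (clamp 0 T t)" for v
    using continuous_on_cbox_bcontfunE[of 0 T "Fv v"] contF by (metis cbox_interval)
  define \<Phi> where "\<Phi> v = (SOME g. \<forall>t. apply_bcontfun g t = Fv v (clamp 0 T t))" for v
  have \<Phi>: "apply_bcontfun (\<Phi> v) t = Fv v (clamp 0 T t)" for v t
    unfolding \<Phi>_def using someI_ex[OF ex[of v]] by blast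
  have intexp: "integral {0..\<tau>} (\<lambda>r. L * d * exp (2 * L * r)) = d * (exp (2 * L * \<tau>) - 1) / 2"
    if "0 \<le> \<tau>" for \<tau> d
  proof -
    have "((\<lambda>r. L * d * exp (2 * L * r)) has_integral
        (d * exp (2 * L * \<tau>) / 2 - d * exp (2 * L * 0) / 2)) {0..\<tau>}"
    proof (rule fundamental_theorem_of_calculus[OF that])
      fix r assume "r \<in> {0..\<tau>}"
      have "((\<lambda>r. d * exp (2 * L * r) / 2) has_real_derivative L * d * exp (2 * L * r)) (at r within {0..\<tau>})"
        by (auto intro!: derivative_eq_intros)
      then show "((\<lambda>r. d * exp (2 * L * r) / 2) has_vector_derivative L * d * exp (2 * L * r)) (at r within {0..\<tau>})"
        by (simp add: has_real_derivative_iff_has_vector_derivative)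
    qed
    then have "integral {0..\<tau>} (\<lambda>r. L * d * exp (2 * L * r)) = d * exp (2 * L * \<tau>) / 2 - d * exp (2 * L * 0) / 2"
      by (rule integral_unique)
    then show ?thesis by (simp add: diff_divide_distrib right_diff_distrib)
  qed
  have contr: "dist (\<Phi> v) (\<Phi> w) \<le> 1 / 2 * dist v w" for v w
  proof (rule dist_bound)
    fix t
    define \<tau> where "\<tau> = clamp 0 T t"
    define d where "d = dist v w"
    have \<tau>: "0 \<le> \<tau>" "\<tau> \<le> T" using clamp_real_in[of T t] T by (auto simp: \<tau>_def)
    have int1: "h v integrable_on {0..\<tau>}" "h w integrable_on {0..\<tau>}"
      by (auto intro!: integrable_continuous_interval conth)
    have pt: "norm (h v r - h w r) \<le> L * d * exp (2 * L * r)" for r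
    proof -
      have "norm (h v r - h w r) = dist (h v r) (h w r)" by (simp add: dist_norm)
      also have "\<dots> \<le> L * dist (exp (2 * L * r) *\<^sub>R apply_bcontfun v r) (exp (2 * L * r) *\<^sub>R apply_bcontfun w r)"
        unfolding h_def by (rule lip)
      also have "dist (exp (2 * L * r) *\<^sub>R apply_bcontfun v r) (exp (2 * L * r) *\<^sub>R apply_bcontfun w r)
          = exp (2 * L * r) * dist (apply_bcontfun v r) (apply_bcontfun w r)"
        by (simp add: dist_norm flip: scaleR_right_diff_distrib)
      also have "\<dots> \<le> exp (2 * L * r) * d" unfolding d_def by (intro mult_left_mono dist_bounded) auto
      finally show ?thesis using L by (simp add: mult_left_mono algebra_simps)
    qed
    have "norm (integral {0..\<tau>} (\<lambda>r. h v r - h w r)) \<le> integral {0..\<tau>} (\<lambda>r. L * d * exp (2 * L * r))"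
      by (rule integral_norm_bound_integral) (auto intro!: integrable_continuous_interval continuous_intros conth pt)
    also have "\<dots> = d * (exp (2 * L * \<tau>) - 1) / 2" by (rule intexp[OF \<tau>(1)])
    finally have nb: "norm (integral {0..\<tau>} (h v) - integral {0..\<tau>} (h w)) \<le> d * (exp (2 * L * \<tau>) - 1) / 2"
      using integral_diff[OF int1] by simp
    have "dist (apply_bcontfun (\<Phi> v) t) (apply_bcontfun (\<Phi> w) t) = dist (Fv v \<tau>) (Fv w \<tau>)"
      by (simp add: \<Phi> \<tau>_def)
    also have "\<dots> = exp (- 2 * L * \<tau>) * norm (integral {0..\<tau>} (h v) - integral {0..\<tau>} (h w))"
      by (simp add: Fv_def dist_norm flip: scaleR_right_diff_distrib)
    also have "\<dots> \<le> exp (- 2 * L * \<tau>) * (d * (exp (2 * L * \<tau>) - 1) / 2)"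
      by (rule mult_left_mono[OF nb]) simp
    also have "\<dots> = d / 2 * (exp (- 2 * L * \<tau>) * exp (2 * L * \<tau>) - exp (- 2 * L * \<tau>))"
      by (simp add: field_simps)
    also have "\<dots> = d / 2 * (1 - exp (- 2 * L * \<tau>))"
      by (simp flip: exp_add)
    also have "\<dots> \<le> d / 2" using d_def by (simp add: mult_left_le)
    finally show "dist (apply_bcontfun (\<Phi> v) t) (apply_bcontfun (\<Phi> w) t) \<le> 1 / 2 * dist v w"
      by (simp add: d_def)
  qed
  obtain v where v: "\<Phi> v = v" using banach_fix_type[of "1/2" \<Phi>] contr by auto
  define y where "y t = x0 + integral {0..t} (h v)" for t
  have yv: "y t = exp (2 * L * t) *\<^sub>R apply_bcontfun v t" if "t \<in> {0..T}" for t
  proof -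
    have "apply_bcontfun v t = Fv v t" using \<Phi>[of v t] v clamp_real_id[OF that] by simp
    then show ?thesis by (simp add: Fv_def y_def exp_minus field_simps)
  qed
  have hy: "h v t = G (y t)" if "t \<in> {0..T}" for t unfolding h_def yv[OF that] ..
  have "continuous_on {0..T} y" unfolding y_def[abs_def] by (intro continuous_intros int_cont conth)
  moreover have "y 0 = x0" by (simp add: y_def)
  moreover have "(y has_vector_derivative G (y t)) (at t)" if "0 < t" "t < T" for t
  proof -
    have "((\<lambda>u. integral {0..u} (h v)) has_vector_derivative h v t) (at t within {0..T})"
      by (rule integral_has_vector_derivative[OF conth]) (use that in auto)
    then have "((\<lambda>u. integral {0..u} (h v)) has_vector_derivative h v t) (at t)"
      using at_within_Icc_at[OF that] by simp
    then have "(y has_vector_derivative 0 + h v t) (at t)"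
      unfolding y_def[abs_def] by (intro derivative_intros)
    then show ?thesis using hy[of t] that by simp
  qed
  ultimately show ?thesis by blast
qed



lemma barrier:
  fixes f f' :: "real \<Rightarrow> real"
  assumes cont: "continuous_on {a..e} f"
    and der: "\<And>t. a < t \<Longrightarrow> t < e \<Longrightarrow> (f has_real_derivative f' t) (at t)"
    and neg: "\<And>t. a < t \<Longrightarrow> t < e \<Longrightarrow> f t > 0 \<Longrightarrow> f' t \<le> 0"
    and fa: "f a \<le> 0" and t: "a \<le> t" "t \<le> e"
  shows "f t \<le> 0"
proof (rule ccontr)
  assume "\<not> f t \<le> 0"
  then have ft: "f t > 0" by simp
  define Z where "Z = {a..t} \<inter> f -` {..0}"
  have ct: "continuous_on {a..t} f" using cont by (rule continuous_on_subset) (use t in auto)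
  have "closed Z" unfolding Z_def by (rule continuous_closed_preimage[OF ct]) auto
  moreover have "a \<in> Z" using fa t by (auto simp: Z_def)
  moreover have bdd: "bdd_above Z" by (auto simp: Z_def bdd_above_def)
  ultimately have "Sup Z \<in> Z" by (intro closed_contains_Sup) auto
  define t0 where "t0 = Sup Z"
  have t0: "a \<le> t0" "t0 \<le> t" "f t0 \<le> 0" using \<open>Sup Z \<in> Z\<close> by (auto simp: Z_def t0_def)
  have pos: "f s > 0" if "t0 < s" "s \<le> t" for s
  proof (rule ccontr)
    assume "\<not> f s > 0"
    then have "s \<in> Z" using that t0 by (auto simp: Z_def)
    then have "s \<le> t0" using cSup_upper[OF _ bdd] by (simp add: t0_def)
    then show False using that by simp
  qed
  have "t0 < t" using t0 ft by (cases "t0 = t") auto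
  have "f t0 \<ge> f t"
  proof (rule DERIV_nonpos_imp_decreasing_open[where a=t0 and b=t and f=f])
    show "t0 \<le> t" using \<open>t0 < t\<close> by simp
    fix s assume s: "t0 < s" "s < t"
    then show "\<exists>y. DERIV f s :> y \<and> y \<le> 0"
      using der[of s] neg[of s] pos[of s] t0 t by force
  next
    show "continuous_on {t0..t} f" using ct by (rule continuous_on_subset) (use t0 in auto)
  qed
  then show False using ft t0 by simp
qed

lemma abs_prod_le: "\<bar>x\<bar> \<le> X \<Longrightarrow> \<bar>y\<bar> \<le> Y \<Longrightarrow> \<bar>x * y :: real\<bar> \<le> X * Y"
  by (simp add: abs_mult mult_mono')

definition cl :: "real \<Rightarrow> real \<Rightarrow> real" where "cl M u = max 0 (min M u)"

lemma cl_lip: "\<bar>cl M u - cl M v\<bar> \<le> \<bar>u - v\<bar>" by (auto simp: cl_def)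
lemma cl_bnd: "0 \<le> M \<Longrightarrow> \<bar>cl M u\<bar> \<le> M" by (auto simp: cl_def)
lemma cl_nonneg: "0 \<le> cl M u" by (auto simp: cl_def)
lemma cl_id: "0 \<le> u \<Longrightarrow> u \<le> M \<Longrightarrow> cl M u = u" by (auto simp: cl_def)
lemma cl_le: "0 \<le> u \<Longrightarrow> cl M u \<le> u" by (auto simp: cl_def)
lemma cl_neg: "u < 0 \<Longrightarrow> cl M u = 0" by (auto simp: cl_def)
lemma cl_big: "0 \<le> M \<Longrightarrow> M < u \<Longrightarrow> cl M u = M" by (auto simp: cl_def)

context SI begin

definition Gc :: "real \<Rightarrow> real \<times> real \<Rightarrow> real \<times> real" where
  "Gc R z = (cl A (fst z) * (A - cl A (fst z) - b * cl R (snd z)), cl R (snd z) * (b * cl A (fst z) - cc))"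

lemma Gc_lip:
  assumes R: "0 \<le> R"
  shows "dist (Gc R u) (Gc R v) \<le> (3 * A + b * R + A * b + b * A + cc + R * b + 1) * dist u v"
proof -
  define d where "d = dist u v"
  define a1 where "a1 = cl A (fst u)"
  define a2 where "a2 = cl A (fst v)"
  define e1 where "e1 = cl R (snd u)"
  define e2 where "e2 = cl R (snd v)"
  have da: "\<bar>a1 - a2\<bar> \<le> d" unfolding a1_def a2_def d_def
    using cl_lip[of A "fst u" "fst v"] dist_fst_le[of u v] by (simp add: dist_real_def)
  have de: "\<bar>e1 - e2\<bar> \<le> d" unfolding e1_def e2_def d_def
    using cl_lip[of R "snd u" "snd v"] dist_snd_le[of u v] by (simp add: dist_real_def)
  have ba: "\<bar>a1\<bar> \<le> A" "\<bar>a2\<bar> \<le> A" using cl_bnd A by (auto simp: a1_def a2_def less_imp_le)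
  have be: "\<bar>e1\<bar> \<le> R" "\<bar>e2\<bar> \<le> R" using cl_bnd R by (auto simp: e1_def e2_def)
  have d0: "0 \<le> d" by (simp add: d_def)
  have eq1: "a1 * (A - a1 - b * e1) - a2 * (A - a2 - b * e2) = (a1 - a2) * (A - a1 - b * e1) + a2 * ((a2 - a1) + b * (e2 - e1))"
    by (simp add: algebra_simps)
  have t1: "\<bar>A - a1 - b * e1\<bar> \<le> A + A + b * R"
  proof -
    have "\<bar>b * e1\<bar> \<le> b * R" using abs_prod_le[of b b e1 R] b be by simp
    then show ?thesis using ba A by arith
  qed
  have t2: "\<bar>(a2 - a1) + b * (e2 - e1)\<bar> \<le> d + b * d"
  proof -
    have "\<bar>b * (e2 - e1)\<bar> \<le> b * d" using abs_prod_le[of b b "e2 - e1" d] b de by (simp add: abs_minus_commute)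
    then show ?thesis using da by arith
  qed
  have D1: "\<bar>a1 * (A - a1 - b * e1) - a2 * (A - a2 - b * e2)\<bar> \<le> d * (A + A + b * R) + A * (d + b * d)"
    unfolding eq1 using abs_prod_le[OF da t1] abs_prod_le[OF ba(2) t2] by arith
  have eq2: "e1 * (b * a1 - cc) - e2 * (b * a2 - cc) = (e1 - e2) * (b * a1 - cc) + e2 * (b * (a1 - a2))"
    by (simp add: algebra_simps)
  have t3: "\<bar>b * a1 - cc\<bar> \<le> b * A + cc"
  proof -
    have "\<bar>b * a1\<bar> \<le> b * A" using abs_prod_le[of b b a1 A] b ba by simp
    then show ?thesis using c by arith
  qed
  have t4: "\<bar>b * (a1 - a2)\<bar> \<le> b * d" using abs_prod_le[of b b "a1 - a2" d] b da by simp
  have D2: "\<bar>e1 * (b * a1 - cc) - e2 * (b * a2 - cc)\<bar> \<le> d * (b * A + cc) + R * (b * d)"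
    unfolding eq2 using abs_prod_le[OF de t3] abs_prod_le[OF be(2) t4] by arith
  have "dist (Gc R u) (Gc R v) = norm (a1 * (A - a1 - b * e1) - a2 * (A - a2 - b * e2),
      e1 * (b * a1 - cc) - e2 * (b * a2 - cc))"
    by (simp add: Gc_def dist_norm a1_def a2_def e1_def e2_def)
  also have "\<dots> \<le> \<bar>a1 * (A - a1 - b * e1) - a2 * (A - a2 - b * e2)\<bar> + \<bar>e1 * (b * a1 - cc) - e2 * (b * a2 - cc)\<bar>"
    unfolding norm_Pair real_norm_def power2_abs by (rule sqrt_sum_squares_le_sum_abs)
  also have "\<dots> \<le> d * (A + A + b * R) + A * (d + b * d) + (d * (b * A + cc) + R * (b * d))"
    using D1 D2 by arith
  also have "\<dots> \<le> (3 * A + b * R + A * b + b * A + cc + R * b + 1) * d"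
    using d0 by (simp add: algebra_simps)
  finally show ?thesis by (simp add: d_def)
qed

lemma exist_seg:
  assumes x0: "x0 \<in> phase_dom A"
  shows "\<exists>y. segsol 0 T y \<and> y 0 = x0"
proof -
  define R where "R = snd x0 * exp (b * A * T) + 1"
  have i0: "snd x0 \<ge> 0" "fst x0 \<ge> 0" "fst x0 \<le> A" using x0 unfolding phase_dom_def by auto
  have R0: "0 \<le> R" using i0 by (simp add: R_def)
  define LL where "LL = 3 * A + b * R + A * b + b * A + cc + R * b + 1"
  have LL0: "LL > 0"
  proof -
    have "R * b \<ge> 0" "A * b > 0" "b * R \<ge> 0" "b * A > 0" using A b R0 by auto
    then show ?thesis using A c unfolding LL_def by linarith
  qed
  obtain y where y: "continuous_on {0..T} y" "y 0 = x0"
      "\<And>t. 0 < t \<Longrightarrow> t < T \<Longrightarrow> (y has_vector_derivative Gc R (y t)) (at t)"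
    using picard[OF LL0 Gc_lip[OF R0, unfolded LL_def[symmetric]] T, of x0] by blast
  have ds: "((\<lambda>t. fst (y t)) has_real_derivative fst (Gc R (y t))) (at t)" if "0 < t" "t < T" for t
    using vd_fst[OF y(3)[OF that]] .
  have di: "((\<lambda>t. snd (y t)) has_real_derivative snd (Gc R (y t))) (at t)" if "0 < t" "t < T" for t
    using vd_snd[OF y(3)[OF that]] .
  have cs: "continuous_on {0..T} (\<lambda>t. fst (y t))" using y(1) by (rule continuous_on_fst)
  have ci: "continuous_on {0..T} (\<lambda>t. snd (y t))" using y(1) by (rule continuous_on_snd)
  have s_nn: "fst (y t) \<ge> 0" if "0 \<le> t" "t \<le> T" for t
  proof -
    have "- fst (y t) \<le> 0"
    proof (rule barrier[where f="\<lambda>t. - fst (y t)" and f'="\<lambda>t. - fst (Gc R (y t))", OF _ _ _ _ that])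
      show "continuous_on {0..T} (\<lambda>t. - fst (y t))" using continuous_on_minus[OF cs] by simp
      fix t assume t: "0 < t" "t < T"
      show "((\<lambda>t. - fst (y t)) has_real_derivative - fst (Gc R (y t))) (at t)"
        using DERIV_minus[OF ds[OF t]] .
      assume "- fst (y t) > 0"
      then have "cl A (fst (y t)) = 0" by (intro cl_neg) simp
      then show "- fst (Gc R (y t)) \<le> 0" by (simp add: Gc_def)
    qed (use y(2) i0 in simp)
    then show ?thesis by simp
  qed
  have i_nn: "snd (y t) \<ge> 0" if "0 \<le> t" "t \<le> T" for t
  proof -
    have "- snd (y t) \<le> 0"
    proof (rule barrier[where f="\<lambda>t. - snd (y t)" and f'="\<lambda>t. - snd (Gc R (y t))", OF _ _ _ _ that])
      show "continuous_on {0..T} (\<lambda>t. - snd (y t))" using continuous_on_minus[OF ci] by simp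
      fix t assume t: "0 < t" "t < T"
      show "((\<lambda>t. - snd (y t)) has_real_derivative - snd (Gc R (y t))) (at t)"
        using DERIV_minus[OF di[OF t]] .
      assume "- snd (y t) > 0"
      then have "cl R (snd (y t)) = 0" by (intro cl_neg) simp
      then show "- snd (Gc R (y t)) \<le> 0" by (simp add: Gc_def)
    qed (use y(2) i0 in simp)
    then show ?thesis by simp
  qed
  have s_le: "fst (y t) \<le> A" if "0 \<le> t" "t \<le> T" for t
  proof -
    have "fst (y t) - A \<le> 0"
    proof (rule barrier[where f="\<lambda>t. fst (y t) - A" and f'="\<lambda>t. fst (Gc R (y t))", OF _ _ _ _ that])
      show "continuous_on {0..T} (\<lambda>t. fst (y t) - A)" using continuous_on_diff[OF cs continuous_on_const] by simp
      fix t assume t: "0 < t" "t < T"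
      show "((\<lambda>t. fst (y t) - A) has_real_derivative fst (Gc R (y t))) (at t)"
        using DERIV_diff[OF ds[OF t] DERIV_const[of A]] by simp
      assume "fst (y t) - A > 0"
      then have "cl A (fst (y t)) = A" using A by (intro cl_big) auto
      moreover have "cl R (snd (y t)) \<ge> 0" by (rule cl_nonneg)
      ultimately show "fst (Gc R (y t)) \<le> 0" using A b by (simp add: Gc_def)
    qed (use y(2) i0 in simp)
    then show ?thesis by simp
  qed
  have i_le: "snd (y t) \<le> snd x0 * exp (b * A * (t - 0))" if "0 \<le> t" "t \<le> T" for t
  proof (rule lin_le[OF ci di _ that, unfolded y(2)])
    fix t assume t: "0 < t" "t < T"
    have st: "cl A (fst (y t)) = fst (y t)" using s_nn s_le t by (intro cl_id) auto
    have it: "snd (y t) \<ge> 0" using i_nn t by auto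
    have "b * fst (y t) \<le> b * A" using s_le[of t] t b by (intro mult_left_mono) auto
    then have X: "b * fst (y t) - cc \<le> b * A" using c by linarith
    show "snd (Gc R (y t)) \<le> b * A * snd (y t)"
    proof (cases "b * fst (y t) - cc \<ge> 0")
      case True
      have "cl R (snd (y t)) * (b * fst (y t) - cc) \<le> snd (y t) * (b * fst (y t) - cc)"
        by (rule mult_right_mono[OF cl_le[OF it] True])
      also have "\<dots> \<le> snd (y t) * (b * A)" by (rule mult_left_mono[OF X it])
      finally show ?thesis by (simp add: Gc_def st algebra_simps)
    next
      case False
      have "cl R (snd (y t)) * (b * fst (y t) - cc) \<le> 0"
        using False cl_nonneg[of R "snd (y t)"] by (simp add: mult_nonneg_nonpos)
      moreover have "0 \<le> b * A * snd (y t)" using b A it by simp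
      ultimately show ?thesis by (simp add: Gc_def st)
    qed
  qed
  have "(y has_vector_derivative vfield A b sg g (y t)) (at t)" if "0 < t" "t < T" for t
  proof -
    have st: "cl A (fst (y t)) = fst (y t)" using s_nn s_le that by (intro cl_id) auto
    have "exp (b * A * (t - 0)) \<le> exp (b * A * T)" using that b A by (simp add: mult_left_mono)
    then have "snd x0 * exp (b * A * (t - 0)) \<le> snd x0 * exp (b * A * T)" using i0(1) by (rule mult_left_mono)
    then have "snd (y t) \<le> snd x0 * exp (b * A * T)" using i_le[of t] that by simp
    then have it: "cl R (snd (y t)) = snd (y t)" using i_nn that by (intro cl_id) (auto simp: R_def)
    have "Gc R (y t) = vfield A b sg g (y t)" by (simp add: Gc_def vfield_def st it algebra_simps)
    then show ?thesis using y(3)[OF that] by simp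
  qed
  then have "segsol 0 T y" using y(1) by (simp add: segsol_def)
  then show ?thesis using y(2) by blast
qed

end



context SI begin

definition seg0 :: "real \<times> real \<Rightarrow> real \<Rightarrow> real \<times> real" where
  "seg0 d = (SOME y. segsol 0 T y \<and> y 0 = d)"

lemma seg0: "d \<in> phase_dom A \<Longrightarrow> segsol 0 T (seg0 d) \<and> seg0 d 0 = d"
  unfolding seg0_def using someI_ex[OF exist_seg] by blast

lemma seg0_pd: "d \<in> phase_dom A \<Longrightarrow> 0 \<le> t \<Longrightarrow> t \<le> T \<Longrightarrow> seg0 d t \<in> phase_dom A"
  using pd[of 0 T "seg0 d" t] seg0[of d] T by auto

definition imp :: "real \<times> real \<Rightarrow> real \<times> real" where "imp z = ((1 - p) * fst z, snd z)"

primrec dd :: "real \<times> real \<Rightarrow> nat \<Rightarrow> real \<times> real" where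
  "dd x0 0 = x0"
| "dd x0 (Suc k) = imp (seg0 (dd x0 k) T)"

lemma dd_pd: "x0 \<in> phase_dom A \<Longrightarrow> dd x0 k \<in> phase_dom A"
proof (induction k)
  case 0 then show ?case by simp
next
  case (Suc k)
  then have "seg0 (dd x0 k) T \<in> phase_dom A" using seg0_pd T by auto
  then have h: "0 \<le> fst (seg0 (dd x0 k) T)" "fst (seg0 (dd x0 k) T) \<le> A" "0 \<le> snd (seg0 (dd x0 k) T)"
    unfolding phase_dom_def by auto
  have "(1 - p) * fst (seg0 (dd x0 k) T) \<le> fst (seg0 (dd x0 k) T)"
    using h p0 p1 by (intro mult_left_le_one_le) auto
  then show ?case using h p1 unfolding phase_dom_def by (simp add: imp_def)
qed

definition gsol :: "real \<times> real \<Rightarrow> real \<Rightarrow> real \<times> real" where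
  "gsol x0 t = seg0 (dd x0 (nat \<lfloor>t / T\<rfloor>)) (t - real (nat \<lfloor>t / T\<rfloor>) * T)"

lemma floor_k: "real k * T \<le> t \<Longrightarrow> t < real (Suc k) * T \<Longrightarrow> nat \<lfloor>t / T\<rfloor> = k"
proof -
  assume a: "real k * T \<le> t" "t < real (Suc k) * T"
  have "real k \<le> t / T" "t / T < real k + 1" using a T by (auto simp: field_simps)
  then have "\<lfloor>t / T\<rfloor> = int k" by (simp add: floor_eq_iff)
  then show ?thesis by simp
qed

lemma gsol_on: "real k * T \<le> t \<Longrightarrow> t < real (Suc k) * T \<Longrightarrow> gsol x0 t = seg0 (dd x0 k) (t - real k * T)"
  unfolding gsol_def using floor_k by simp

lemma shift_cont:
  assumes "x0 \<in> phase_dom A"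
  shows "continuous_on {real k * T..real (Suc k) * T} (\<lambda>t. seg0 (dd x0 k) (t - real k * T))"
proof -
  have c: "continuous_on {0..T} (seg0 (dd x0 k))" using seg0[OF dd_pd[OF assms]] unfolding segsol_def by blast
  show ?thesis
    by (rule continuous_on_compose2[OF c]) (auto intro!: continuous_intros simp: algebra_simps)
qed

lemma gsol_solution:
  assumes x0: "x0 \<in> phase_dom A"
  shows "is_solution A b sg g p T (gsol x0)" "gsol x0 0 = x0"
proof -
  show "gsol x0 0 = x0" using seg0[OF x0] by (simp add: gsol_def)
  have lt: "real k * T < real (Suc k) * T" for k using T by (simp add: algebra_simps)
  have D: "(gsol x0 has_vector_derivative vfield A b sg g (gsol x0 t)) (at t)"
    if t: "real n * T < t" "t < real (Suc n) * T" for n t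
  proof -
    have ss: "segsol 0 T (seg0 (dd x0 n))" using seg0[OF dd_pd[OF x0]] by blast
    have tt: "0 < t - real n * T" "t - real n * T < T" using t by (auto simp: algebra_simps)
    have d1: "(seg0 (dd x0 n) has_vector_derivative vfield A b sg g (seg0 (dd x0 n) (t - real n * T))) (at (t - real n * T))"
      using ss tt unfolding segsol_def by blast
    have d0: "((\<lambda>t. t - real n * T) has_vector_derivative 1) (at t)"
      by (auto intro!: derivative_eq_intros simp: has_real_derivative_iff_has_vector_derivative[symmetric])
    have "((seg0 (dd x0 n) \<circ> (\<lambda>t. t - real n * T)) has_vector_derivative
        1 *\<^sub>R vfield A b sg g (seg0 (dd x0 n) (t - real n * T))) (at t)"
      using vector_diff_chain_at[OF d0 d1] .
    then have "((\<lambda>t. seg0 (dd x0 n) (t - real n * T)) has_vector_derivative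
        vfield A b sg g (gsol x0 t)) (at t)"
      using gsol_on[of n t x0] t by (simp add: o_def)
    then show ?thesis
    proof (rule has_vector_derivative_transform_within_open[where S="{real n * T<..<real (Suc n) * T}"])
      fix y assume "y \<in> {real n * T<..<real (Suc n) * T}"
      then show "seg0 (dd x0 n) (y - real n * T) = gsol x0 y" by (intro gsol_on[symmetric]) auto
    qed (use t in auto)
  qed
  have R: "(gsol x0 \<longlongrightarrow> gsol x0 (real n * T)) (at_right (real n * T))" for n
  proof -
    have "((\<lambda>t. seg0 (dd x0 n) (t - real n * T)) \<longlongrightarrow> seg0 (dd x0 n) (real n * T - real n * T))
        (at (real n * T) within {real n * T..real (Suc n) * T})"
      using shift_cont[OF x0, of n] lt[of n] unfolding continuous_on_def
      by (intro bspec[where x="real n * T"]) auto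
    then have "((\<lambda>t. seg0 (dd x0 n) (t - real n * T)) \<longlongrightarrow> gsol x0 (real n * T)) (at_right (real n * T))"
      using at_within_Icc_at_right[OF lt[of n]] gsol_on[of n "real n * T" x0] lt[of n] by simp
    moreover have "eventually (\<lambda>t. seg0 (dd x0 n) (t - real n * T) = gsol x0 t) (at_right (real n * T))"
      unfolding eventually_at_right_field using lt[of n]
      by (auto intro!: exI[of _ "real (Suc n) * T"] gsol_on[symmetric])
    ultimately show ?thesis by (rule Lim_transform_eventually)
  qed
  have Lf: "\<exists>L. (gsol x0 \<longlongrightarrow> L) (at_left (real n * T)) \<and> gsol x0 (real n * T) = ((1 - p) * fst L, snd L)"
    if "n \<ge> 1" for n
  proof -
    define k where "k = n - 1"
    have n: "n = Suc k" using that by (simp add: k_def)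
    have "((\<lambda>t. seg0 (dd x0 k) (t - real k * T)) \<longlongrightarrow> seg0 (dd x0 k) (real (Suc k) * T - real k * T))
        (at (real (Suc k) * T) within {real k * T..real (Suc k) * T})"
      using shift_cont[OF x0, of k] lt[of k] unfolding continuous_on_def
      by (intro bspec[where x="real (Suc k) * T"]) auto
    then have "((\<lambda>t. seg0 (dd x0 k) (t - real k * T)) \<longlongrightarrow> seg0 (dd x0 k) T) (at_left (real (Suc k) * T))"
      using at_within_Icc_at_left[OF lt[of k]] by (simp add: algebra_simps)
    moreover have "eventually (\<lambda>t. seg0 (dd x0 k) (t - real k * T) = gsol x0 t) (at_left (real (Suc k) * T))"
      unfolding eventually_at_left_field using lt[of k]
      by (auto intro!: exI[of _ "real k * T"] gsol_on[symmetric])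
    ultimately have "(gsol x0 \<longlongrightarrow> seg0 (dd x0 k) T) (at_left (real (Suc k) * T))"
      by (rule Lim_transform_eventually)
    moreover have "gsol x0 (real (Suc k) * T) = imp (seg0 (dd x0 k) T)"
      using gsol_on[of "Suc k" "real (Suc k) * T" x0] lt[of "Suc k"] seg0[OF dd_pd[OF x0], of "Suc k"] by simp
    ultimately show ?thesis unfolding n imp_def by blast
  qed
  show "is_solution A b sg g p T (gsol x0)"
    unfolding is_solution_def
  proof (intro conjI allI impI)
    fix n t assume "real n * T < t \<and> t < real (Suc n) * T"
    then show "(gsol x0 has_vector_derivative vfield A b sg g (gsol x0 t)) (at t)" using D[of n t] by simp
  next
    fix n :: nat show "(gsol x0 \<longlongrightarrow> gsol x0 (real n * T)) (at_right (real n * T))" by (rule R)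
  next
    fix n :: nat assume "1 \<le> n"
    then show "\<exists>L. (gsol x0 \<longlongrightarrow> L) (at_left (real n * T)) \<and> gsol x0 (real n * T) = ((1 - p) * fst L, snd L)"
      by (rule Lf)
  qed
qed

lemma exists_solution:
  "x0 \<in> phase_dom A \<Longrightarrow> \<exists>x. is_solution A b sg g p T x \<and> x 0 = x0"
  using gsol_solution by blast

end



lemma nbhd_ball:
  assumes "nbhd A x0 V"
  obtains e where "e > 0" "\<And>z. z \<in> phase_dom A \<Longrightarrow> dist x0 z < e \<Longrightarrow> z \<in> V"
proof -
  obtain U where U: "openin (top_of_set (phase_dom A)) U" "x0 \<in> U" "U \<subseteq> V"
    using assms unfolding nbhd_def by blast
  obtain Op where Op: "open Op" "U = phase_dom A \<inter> Op" using U(1) unfolding openin_open by blast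
  obtain e where e: "e > 0" "ball x0 e \<subseteq> Op" using Op U(2) open_contains_ball by blast
  show ?thesis
    by (rule that[OF e(1)]) (use e Op U in auto)
qed

lemma nbhd_ballI:
  assumes "x0 \<in> phase_dom A" "e > 0"
  shows "nbhd A x0 (phase_dom A \<inter> ball x0 e)"
  unfolding nbhd_def using assms by (auto intro!: exI[of _ "phase_dom A \<inter> ball x0 e"])

lemma dist_pair_le: "dist (a, c) (a', c') \<le> \<bar>a - a'\<bar> + \<bar>c - (c'::real)\<bar>"
  unfolding dist_Pair_Pair dist_real_def using sqrt_sum_squares_le_sum_abs[of "a - a'" "c - c'"]
  by (simp add: power2_abs)

lemma dist_fst_ge: "\<bar>fst u - fst v\<bar> \<le> dist u (v :: real \<times> real)"
  using dist_fst_le[of u v] by (simp add: dist_real_def)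
lemma dist_snd_ge: "\<bar>snd u - snd v\<bar> \<le> dist u (v :: real \<times> real)"
  using dist_snd_le[of u v] by (simp add: dist_real_def)

context SI begin

lemma step_i0:
  assumes "is_solution A b sg g p T x" "snd (x (real k * T)) = 0"
  shows "snd (x (real (Suc k) * T)) = 0"
    "\<And>t. real k * T \<le> t \<Longrightarrow> t < real (Suc k) * T \<Longrightarrow> snd (x t) = 0"
proof -
  obtain y where y: "segsol (real k * T) (real (Suc k) * T) y" "real k * T < real (Suc k) * T"
    "y (real k * T) = x (real k * T)"
    "\<And>t. real k * T \<le> t \<Longrightarrow> t < real (Suc k) * T \<Longrightarrow> y t = x t"
    "x (real (Suc k) * T) = ((1 - p) * fst (y (real (Suc k) * T)), snd (y (real (Suc k) * T)))"
    "real (Suc k) * T - real k * T = T"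
    using segk[OF assms(1)] by blast
  have ia: "snd (y (real k * T)) = 0" using assms(2) y(3) by simp
  show "snd (x (real (Suc k) * T)) = 0" using i_zero[OF y(1,2) ia, of "real (Suc k) * T"] y(2,5) by simp
  fix t assume t: "real k * T \<le> t" "t < real (Suc k) * T"
  then show "snd (x t) = 0" using i_zero[OF y(1,2) ia, of t] y(4)[OF t] by simp
qed

abbreviation "KK \<equiv> exp (A * T) * (1 - p) - 1"
definition ff :: "real \<Rightarrow> real" where "ff \<tau> = A * KK / (KK + p * exp (A * (T - \<tau>)))"

lemma calS_on:
  assumes "real n * T \<le> t" "t < real (Suc n) * T"
  shows "calS A p T t = ff (t - real n * T)"
proof -
  have "real n \<le> t / T" "t / T < real n + 1" using assms T by (auto simp: field_simps)
  then have "\<lfloor>t / T\<rfloor> = int n" by (simp add: floor_eq_iff)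
  then show ?thesis by (simp add: calS_def ff_def Let_def)
qed

lemma calS_solution:
  assumes K: "KK > 0"
  shows "is_solution A b sg g p T (\<lambda>t. (calS A p T t, 0))"
proof -
  have Dpos: "KK + p * exp (A * (T - \<tau>)) > 0" for \<tau> using K p0 by (simp add: add_pos_pos)
  have dff: "(ff has_real_derivative ff \<tau> * (A - ff \<tau>)) (at \<tau>)" for \<tau>
  proof -
    have "(ff has_real_derivative
        - (A * KK * (p * (exp (A * (T - \<tau>)) * (A * (0 - 1))))) / (KK + p * exp (A * (T - \<tau>)))\<^sup>2) (at \<tau>)"
      unfolding ff_def[abs_def] using Dpos[of \<tau>]
      by (auto intro!: derivative_eq_intros simp: power2_eq_square)
    then show ?thesis
      by (rule DERIV_cong) (use Dpos[of \<tau>] in \<open>simp add: ff_def field_simps power2_eq_square\<close>)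
  qed
  have cff: "continuous_on S ff" for S
    unfolding ff_def[abs_def] using Dpos by (intro continuous_intros) (auto simp: less_imp_neq[symmetric])
  have lt: "real k * T < real (Suc k) * T" for k using T by (simp add: algebra_simps)
  have D: "((\<lambda>t. (calS A p T t, 0::real)) has_vector_derivative vfield A b sg g (calS A p T t, 0)) (at t)"
    if t: "real n * T < t" "t < real (Suc n) * T" for n t
  proof -
    have "((\<lambda>t. ff (t - real n * T)) has_real_derivative ff (t - real n * T) * (A - ff (t - real n * T)) * (1 - 0)) (at t)"
      by (rule DERIV_chain2[OF dff]) (auto intro!: derivative_eq_intros)
    then have "((\<lambda>t. ff (t - real n * T)) has_vector_derivative calS A p T t * (A - calS A p T t)) (at t)"
      using calS_on[of n t] t by (simp add: has_real_derivative_iff_has_vector_derivative)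
    then have "((\<lambda>t. (ff (t - real n * T), 0::real)) has_vector_derivative (calS A p T t * (A - calS A p T t), 0)) (at t)"
      by (intro has_vector_derivative_Pair) (auto intro: derivative_intros)
    moreover have "vfield A b sg g (calS A p T t, 0) = (calS A p T t * (A - calS A p T t), 0)"
      by (simp add: vfield_def)
    ultimately have "((\<lambda>t. (ff (t - real n * T), 0::real)) has_vector_derivative vfield A b sg g (calS A p T t, 0)) (at t)"
      by simp
    then show ?thesis
    proof (rule has_vector_derivative_transform_within_open[where S="{real n * T<..<real (Suc n) * T}"])
      fix y assume "y \<in> {real n * T<..<real (Suc n) * T}"
      then show "(ff (y - real n * T), 0) = (calS A p T y, 0::real)" using calS_on[of n y] by auto
    qed (use t in auto)
  qed
  have R: "((\<lambda>t. (calS A p T t, 0::real)) \<longlongrightarrow> (calS A p T (real n * T), 0)) (at_right (real n * T))" for n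
  proof -
    have "((\<lambda>t. (ff (t - real n * T), 0::real)) \<longlongrightarrow> (ff (real n * T - real n * T), 0)) (at_right (real n * T))"
      by (intro tendsto_intros continuous_on_tendsto_compose[OF cff[of UNIV]]) (auto intro!: tendsto_eq_intros)
    then have "((\<lambda>t. (ff (t - real n * T), 0::real)) \<longlongrightarrow> (calS A p T (real n * T), 0)) (at_right (real n * T))"
      using calS_on[of n "real n * T"] lt[of n] by simp
    moreover have "eventually (\<lambda>t. (ff (t - real n * T), 0::real) = (calS A p T t, 0)) (at_right (real n * T))"
      unfolding eventually_at_right_field using lt[of n]
      by (auto intro!: exI[of _ "real (Suc n) * T"] calS_on[symmetric])
    ultimately show ?thesis by (rule Lim_transform_eventually)
  qed
  have Lf: "\<exists>L. ((\<lambda>t. (calS A p T t, 0::real)) \<longlongrightarrow> L) (at_left (real n * T)) \<and>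
      (calS A p T (real n * T), 0::real) = ((1 - p) * fst L, snd L)" if "n \<ge> 1" for n
  proof -
    define k where "k = n - 1"
    have n: "n = Suc k" using that by (simp add: k_def)
    have "((\<lambda>t. (ff (t - real k * T), 0::real)) \<longlongrightarrow> (ff T, 0)) (at_left (real (Suc k) * T))"
      by (intro tendsto_intros continuous_on_tendsto_compose[OF cff[of UNIV]]) (auto intro!: tendsto_eq_intros simp: algebra_simps)
    moreover have "eventually (\<lambda>t. (ff (t - real k * T), 0::real) = (calS A p T t, 0)) (at_left (real (Suc k) * T))"
      unfolding eventually_at_left_field using lt[of k]
      by (auto intro!: exI[of _ "real k * T"] calS_on[symmetric])
    ultimately have "((\<lambda>t. (calS A p T t, 0::real)) \<longlongrightarrow> (ff T, 0)) (at_left (real (Suc k) * T))"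
      by (rule Lim_transform_eventually)
    moreover have "calS A p T (real (Suc k) * T) = (1 - p) * ff T"
    proof -
      have "calS A p T (real (Suc k) * T) = ff 0" using calS_on[of "Suc k" "real (Suc k) * T"] lt[of "Suc k"] by simp
      also have "\<dots> = A * KK / (exp (A * T) - 1)" by (simp add: ff_def algebra_simps)
      also have "\<dots> = (1 - p) * (A * KK / ((1 - p) * (exp (A * T) - 1)))" using p1 by simp
      also have "\<dots> = (1 - p) * ff T" by (simp add: ff_def algebra_simps)
      finally show ?thesis .
    qed
    ultimately show ?thesis unfolding n by auto
  qed
  show ?thesis
    unfolding is_solution_def
  proof (intro conjI allI impI)
    fix n t assume "real n * T < t \<and> t < real (Suc n) * T"
    then show "((\<lambda>t. (calS A p T t, 0::real)) has_vector_derivative vfield A b sg g (calS A p T t, 0)) (at t)"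
      using D[of n t] by simp
  next
    fix n :: nat show "((\<lambda>t. (calS A p T t, 0::real)) \<longlongrightarrow> (calS A p T (real n * T), 0)) (at_right (real n * T))"
      by (rule R)
  next
    fix n :: nat assume "1 \<le> n"
    then show "\<exists>L. ((\<lambda>t. (calS A p T t, 0::real)) \<longlongrightarrow> L) (at_left (real n * T)) \<and>
      (calS A p T (real n * T), 0::real) = ((1 - p) * fst L, snd L)" by (rule Lf)
  qed
qed

end



lemma dist0: "dist (0, 0) z = sqrt ((fst z)\<^sup>2 + (snd z)\<^sup>2)"
  by (cases z) (simp add: dist_Pair_Pair dist_real_def)

context SI begin

lemma floor_seg: assumes "0 \<le> t"
  shows "real (nat \<lfloor>t / T\<rfloor>) * T \<le> t" "t < real (Suc (nat \<lfloor>t / T\<rfloor>)) * T"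
proof -
  have f0: "0 \<le> \<lfloor>t / T\<rfloor>" using assms T by simp
  have "real_of_int \<lfloor>t / T\<rfloor> \<le> t / T" "t / T < real_of_int \<lfloor>t / T\<rfloor> + 1" by linarith+
  then have h: "real_of_int \<lfloor>t / T\<rfloor> * T \<le> t" "t < (real_of_int \<lfloor>t / T\<rfloor> + 1) * T"
    using pos_le_divide_eq[OF T] pos_divide_less_eq[OF T] by blast+
  moreover have "real (nat \<lfloor>t / T\<rfloor>) = real_of_int \<lfloor>t / T\<rfloor>" using f0 by simp
  ultimately show "real (nat \<lfloor>t / T\<rfloor>) * T \<le> t" "t < real (Suc (nat \<lfloor>t / T\<rfloor>)) * T"
    by (simp_all add: algebra_simps)
qed

lemma case1_periodic:
  assumes E: "(1 - p) * exp (A * T) < 1" and x: "is_solution A b sg g p T x" "x 0 \<in> phase_dom A"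
    and per: "is_T_periodic T x" and t: "t \<ge> 0"
  shows "x t = (0, 0)"
proof -
  have xT: "x (real (Suc 0) * T) = x (real 0 * T)" using per unfolding is_T_periodic_def
    by (metis add_0 mult_zero_left of_nat_0 of_nat_1 mult_1 One_nat_def order_refl)
  have pd0: "x (real 0 * T) \<in> phase_dom A" using x(2) by simp
  have s0: "fst (x (real 0 * T)) = 0"
  proof (rule ccontr)
    assume "fst (x (real 0 * T)) \<noteq> 0"
    then have sp: "fst (x (real 0 * T)) > 0" using pd0 unfolding phase_dom_def by auto
    define z where "z = 1 / fst (x (real 0 * T))"
    have zp: "z > 0" using sp by (simp add: z_def)
    have "z \<ge> (1 / A + (z - 1 / A) * exp (- A * T)) / (1 - p)"
      using step_z_lower(2)[OF x(1) pd0 sp] xT by (simp add: z_def)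
    then have "1 / A + (z - 1 / A) * exp (- A * T) \<le> z * (1 - p)"
      using p1 by (simp add: pos_divide_le_eq)
    moreover have "1 / A + (z - 1 / A) * exp (- A * T) = 1 / A * (1 - exp (- A * T)) + z * exp (- A * T)"
      by (simp add: algebra_simps)
    ultimately have "z * (1 - p) \<ge> 1 / A * (1 - exp (- A * T)) + z * exp (- A * T)" by simp
    moreover have "1 / A * (1 - exp (- A * T)) \<ge> 0" using A T by simp
    ultimately have "z * (1 - p) \<ge> z * exp (- A * T)" by linarith
    then have "(1 - p) \<ge> exp (- A * T)" using zp by simp
    then have "(1 - p) * exp (A * T) \<ge> exp (- A * T) * exp (A * T)" by (simp add: mult_right_mono)
    then have "(1 - p) * exp (A * T) \<ge> 1" by (simp flip: exp_add)
    then show False using E by simp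
  qed
  have sk: "fst (x (real k * T)) = 0" for k
    by (induction k) (use s0 step_s0(1)[OF x(1)] in auto)
  have "snd (x (real 0 * T)) = snd (x (real 0 * T)) * exp (- cc * T)"
    using step_s0(2)[OF x(1) s0] xT by simp
  moreover have "exp (- cc * T) < 1"
  proof -
    have "- cc * T < 0" using mult_pos_pos[OF c T] by linarith
    then show ?thesis by simp
  qed
  ultimately have i0: "snd (x (real 0 * T)) = 0" by (metis mult.right_neutral mult_cancel_left less_irrefl)
  have ik: "snd (x (real k * T)) = 0" for k
    by (induction k) (use i0 step_s0(2)[OF x(1) sk] in auto)
  define k where "k = nat \<lfloor>t / T\<rfloor>"
  have "real k * T \<le> t" "t < real (Suc k) * T" using floor_seg[OF t] by (auto simp: k_def)
  then show ?thesis using step_s0(3)[OF x(1) sk] ik by simp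
qed

lemma case1_stable:
  assumes E: "(1 - p) * exp (A * T) \<le> 1"
  shows "is_stable A b sg g p T (0, 0)"
  unfolding is_stable_def
proof (intro allI impI)
  fix V assume V: "nbhd A (0, 0) V"
  obtain e where e: "e > 0" "\<And>z. z \<in> phase_dom A \<Longrightarrow> dist (0, 0) z < e \<Longrightarrow> z \<in> V"
    using nbhd_ball[OF V] by blast
  define d where "d = min e (cc * exp (- A * T) / b)"
  have d0: "d > 0" using e c b by (simp add: d_def)
  have o0: "(0, 0) \<in> phase_dom A" using A by (simp add: phase_dom_def)
  define W where "W = phase_dom A \<inter> ball (0, 0) d"
  have "nbhd A (0, 0) W" unfolding W_def by (rule nbhd_ballI[OF o0 d0])
  moreover have "W \<subseteq> V" using e(2) by (auto simp: W_def d_def)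
  moreover have "\<forall>x. is_solution A b sg g p T x \<and> x 0 \<in> W \<longrightarrow> (\<forall>k. x (real k * T) \<in> V)"
  proof (intro allI impI)
    fix x k assume xs: "is_solution A b sg g p T x \<and> x 0 \<in> W"
    then have x: "is_solution A b sg g p T x" "x 0 \<in> phase_dom A" "dist (0, 0) (x 0) < d"
      by (auto simp: W_def)
    have s0: "fst (x 0) < d" using dist_fst_ge[of "(0,0)" "x 0"] x(3) by simp
    have bnd: "fst (x (real k * T)) \<le> fst (x 0) \<and> snd (x (real k * T)) \<le> snd (x 0) \<and> x (real k * T) \<in> phase_dom A" for k
    proof (induction k)
      case 0 then show ?case using x by simp
    next
      case (Suc k)
      then have pk: "x (real k * T) \<in> phase_dom A" by simp
      have "fst (x (real k * T)) < cc * exp (- A * T) / b" using Suc s0 by (simp add: d_def)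
      then have "b * fst (x (real k * T)) < cc * exp (- A * T)" using b by (simp add: field_simps)
      then have "b * fst (x (real k * T)) * exp (A * T) \<le> cc * exp (- A * T) * exp (A * T)"
        by (simp add: mult_right_mono)
      then have "b * (fst (x (real k * T)) * exp (A * T)) \<le> cc" by (simp add: mult.assoc flip: exp_add)
      note st = step_small[OF x(1) pk this]
      have "0 \<le> fst (x (real k * T))" using pk unfolding phase_dom_def by auto
      then have "(1 - p) * exp (A * T) * fst (x (real k * T)) \<le> fst (x (real k * T))"
        using E p1 by (intro mult_left_le_one_le) auto
      then show ?case using st Suc step_pd(1)[OF x(1) pk] by auto
    qed
    have pk: "x (real k * T) \<in> phase_dom A" using bnd by blast
    have "dist (0, 0) (x (real k * T)) \<le> dist (0, 0) (x 0)"
    proof -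
      have h: "0 \<le> fst (x (real k * T))" "0 \<le> snd (x (real k * T))" using pk unfolding phase_dom_def by auto
      have "(fst (x (real k * T)))\<^sup>2 \<le> (fst (x 0))\<^sup>2" using bnd[of k] h by (intro power_mono) auto
      moreover have "(snd (x (real k * T)))\<^sup>2 \<le> (snd (x 0))\<^sup>2" using bnd[of k] h by (intro power_mono) auto
      ultimately show ?thesis unfolding dist0 by (intro real_sqrt_le_mono add_mono)
    qed
    then have "x (real k * T) \<in> W" using x(3) pk by (simp add: W_def)
    then show "x (real k * T) \<in> V" using \<open>W \<subseteq> V\<close> by blast
  qed
  ultimately show "\<exists>W. nbhd A (0, 0) W \<and> W \<subseteq> V \<and>
      (\<forall>x. is_solution A b sg g p T x \<and> x 0 \<in> W \<longrightarrow> (\<forall>k. x (real k * T) \<in> V))" by blast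
qed

end



context SI begin

definition "al = exp (- A * T) / (1 - p)"
definition "be0 = (1 - exp (- A * T)) / (A * (1 - p))"
definition "zs = be0 / (1 - al)"

lemma phi_eq: "(1 / A + (z - 1 / A) * exp (- A * T)) / (1 - p) = al * z + be0"
proof -
  have "1 / A + (z - 1 / A) * exp (- A * T) = exp (- A * T) * z + (1 - exp (- A * T)) / A"
    by (simp add: algebra_simps diff_divide_distrib)
  then have "(1 / A + (z - 1 / A) * exp (- A * T)) / (1 - p) = exp (- A * T) * z / (1 - p) + (1 - exp (- A * T)) / A / (1 - p)"
    by (simp add: add_divide_distrib)
  then show ?thesis by (simp add: al_def be0_def)
qed

lemma al_pos: "al > 0" using p1 by (simp add: al_def)
lemma be0_pos: "be0 > 0"
proof -
  have "exp (- A * T) < 1" using A T by simp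
  then show ?thesis using A p1 by (simp add: be0_def)
qed

context
  assumes E: "(1 - p) * exp (A * T) > 1"
begin

lemma al_lt1: "al < 1"
proof -
  have "exp (- A * T) * exp (A * T) = 1" by (simp flip: exp_add)
  then have "exp (- A * T) < 1 - p" using E
    by (metis mult.commute mult_less_cancel_left_pos exp_gt_zero mult.right_neutral)
  then show ?thesis using p1 by (simp add: al_def)
qed

lemma zs_pos: "zs > 0" using be0_pos al_lt1 by (simp add: zs_def)

lemma zs_fix: "al * zs + be0 = zs"
  using al_lt1 by (simp add: zs_def field_simps)

lemma calS0: "calS A p T 0 = 1 / zs"
proof -
  define Ex where "Ex = exp (A * T)"
  have Ex1: "Ex > 1" using A T by (simp add: Ex_def)
  have em: "exp (- A * T) = 1 / Ex" by (simp add: Ex_def exp_minus field_simps)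
  have K: "Ex * (1 - p) - 1 > 0" using E by (simp add: Ex_def algebra_simps)
  have "calS A p T 0 = A * (Ex * (1 - p) - 1) / (Ex * (1 - p) - 1 + p * Ex)"
    by (simp add: calS_def Ex_def)
  also have "\<dots> = A * (Ex * (1 - p) - 1) / (Ex - 1)" by (simp add: algebra_simps)
  also have "\<dots> = 1 / zs"
  proof -
    have n1: "Ex \<noteq> 0" "1 - p \<noteq> 0" "A \<noteq> 0" "Ex * (1 - p) - 1 \<noteq> 0" using Ex1 p1 A K by auto
    have h1: "1 - al = (Ex * (1 - p) - 1) / (Ex * (1 - p))" unfolding al_def em using n1 by (simp add: field_simps)
    have h2: "be0 = (Ex - 1) / (Ex * A * (1 - p))" unfolding be0_def em using n1 by (simp add: field_simps)
    have gen: "X / (A * Bv) / (Cv / Bv) = X / (A * Cv)" if "Bv \<noteq> 0" "A \<noteq> 0" for X Bv Cv :: real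
      using that by (simp add: field_simps)
    have "Ex * A * (1 - p) = A * (Ex * (1 - p))" by simp
    then have "zs = (Ex - 1) / (A * (Ex * (1 - p))) / ((Ex * (1 - p) - 1) / (Ex * (1 - p)))"
      unfolding zs_def h1 h2 by simp
    also have "\<dots> = (Ex - 1) / (A * (Ex * (1 - p) - 1))" by (rule gen) (use n1 in auto)
    finally have "zs = (Ex - 1) / (A * (Ex * (1 - p) - 1))" .
    then show ?thesis by simp
  qed
  finally show ?thesis .
qed

lemma ss_bounds: "0 < 1 / zs" "1 / zs < A"
proof -
  show "0 < 1 / zs" using zs_pos by simp
  define Ex where "Ex = exp (A * T)"
  have Ex1: "Ex > 1" using A T by (simp add: Ex_def)
  have "1 / zs = A * (Ex * (1 - p) - 1) / (Ex - 1)"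
    using calS0 by (simp add: calS_def Ex_def algebra_simps)
  also have "\<dots> < A"
  proof -
    have "Ex * (1 - p) - 1 < Ex - 1" using p0 Ex1 by (simp add: algebra_simps)
    then have "A * (Ex * (1 - p) - 1) < A * (Ex - 1)" using A by simp
    then show ?thesis using Ex1 by (simp add: divide_less_eq)
  qed
  finally show "1 / zs < A" .
qed

lemma unstable00: "\<not> is_stable A b sg g p T (0, 0)"
proof -
  define ss where "ss = 1 / zs"
  have ss: "0 < ss" "ss < A" using ss_bounds by (auto simp: ss_def)
  have o0: "(0, 0) \<in> phase_dom A" using A by (simp add: phase_dom_def)
  define V where "V = phase_dom A \<inter> ball (0, 0) (ss / 2)"
  have nV: "nbhd A (0, 0) V" unfolding V_def using ss by (intro nbhd_ballI o0) auto
  have "\<exists>x. is_solution A b sg g p T x \<and> x 0 \<in> W \<and> (\<exists>k. x (real k * T) \<notin> V)"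
    if W: "nbhd A (0, 0) W" for W
  proof -
    obtain e where e: "e > 0" "\<And>z. z \<in> phase_dom A \<Longrightarrow> dist (0, 0) z < e \<Longrightarrow> z \<in> W"
      using nbhd_ball[OF W] by blast
    define s0 where "s0 = min (e / 2) A"
    have s0: "0 < s0" "s0 \<le> A" "s0 < e" using e A by (auto simp: s0_def)
    have pd0: "(s0, 0) \<in> phase_dom A" using s0 by (simp add: phase_dom_def)
    obtain x where x: "is_solution A b sg g p T x" "x 0 = (s0, 0)" using exists_solution[OF pd0] by blast
    have xW: "x 0 \<in> W" using e(2)[OF pd0] s0 x(2) by (simp add: dist_Pair_Pair)
    have x0': "x (real 0 * T) = (s0, 0)" using x(2) by simp
    have ik: "snd (x (real k * T)) = 0" for k
      by (induction k) (use x0' step_i0(1)[OF x(1)] in auto)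
    have pdk: "x (real k * T) \<in> phase_dom A" for k using sol_pd[OF x(1)] x(2) pd0 by simp
    have sk: "fst (x (real k * T)) > 0" for k
      by (induction k) (use x0' s0 step_z_lower(1)[OF x(1) pdk] in auto)
    define z where "z k = 1 / fst (x (real k * T))" for k
    have zrec: "z (Suc k) = al * z k + be0" for k
    proof -
      have "z (Suc k) \<ge> al * z k + be0"
        using step_z_lower(2)[OF x(1) pdk sk, of k] unfolding phi_eq z_def by simp
      moreover have "z (Suc k) \<le> al * z k + be0"
      proof -
        have h: "1 / fst (x (real (Suc k) * T)) \<le> (1 / (A - b * 0) + (1 / fst (x (real k * T)) - 1 / (A - b * 0))
            * exp (- (A - b * 0) * T)) / (1 - p)"
        proof (rule step_z_upper[OF x(1) pdk sk])
          fix t assume "real k * T < t" "t < real (Suc k) * T"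
          then show "snd (x t) \<le> 0" using step_i0(2)[OF x(1) ik[of k] less_imp_le[of "real k * T" t]] by simp
        qed (use A in auto)
        then show ?thesis unfolding z_def by (simp only: mult_zero_right diff_zero phi_eq)
      qed
      ultimately show ?thesis by simp
    qed
    have zk: "z k = zs + al ^ k * (z 0 - zs)" for k
    proof (induction k)
      case 0 then show ?case by simp
    next
      case (Suc k)
      have "z (Suc k) = al * (zs + al ^ k * (z 0 - zs)) + be0" using zrec Suc by simp
      also have "\<dots> = (al * zs + be0) + al ^ Suc k * (z 0 - zs)" by (simp add: algebra_simps)
      finally show ?case using zs_fix by simp
    qed
    have z0: "z 0 > 0" using sk[of 0] by (simp add: z_def)
    obtain k where k: "al ^ k < zs / z 0" using real_arch_pow_inv[of "zs / z 0" al] zs_pos z0 al_lt1 by auto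
    have "al ^ k * z 0 < zs" using k z0 by (simp add: field_simps)
    moreover have "al ^ k * zs \<ge> 0" using al_pos zs_pos by simp
    ultimately have "z k < 2 * zs" using zk[of k] by (simp add: algebra_simps)
    moreover have "z k > 0" using sk[of k] by (simp add: z_def)
    ultimately have "fst (x (real k * T)) > ss / 2"
      unfolding z_def ss_def using zs_pos by (simp add: field_simps)
    then have "dist (0, 0) (x (real k * T)) \<ge> ss / 2"
      using dist_fst_ge[of "(0,0)" "x (real k * T)"] by simp
    then have "x (real k * T) \<notin> V" by (simp add: V_def)
    then show ?thesis using x xW by blast
  qed
  then show ?thesis unfolding is_stable_def using nV by blast
qed

end

end



context SI begin

lemma pw_mono: "0 < u \<Longrightarrow> u \<le> v \<Longrightarrow> exp (b * ln u) \<le> exp (b * ln v)"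
  using b by (simp add: mult_left_mono)

context
  assumes E: "(1 - p) * exp (A * T) > 1"
begin

lemma unstable_ss:
  assumes mu: "mu > 0"
  shows "\<not> is_stable A b sg g p T (1 / zs, 0)"
proof -
  define ss where "ss = 1 / zs"
  have ss: "0 < ss" "ss < A" using ss_bounds[OF E] by (auto simp: ss_def)
  have o0: "(ss, 0) \<in> phase_dom A" using ss by (simp add: phase_dom_def)
  define Q where "Q = exp (b * A * T)"
  have Q: "Q > 0" by (simp add: Q_def)
  define d where "d = mu / (2 * (b * b * Q * T))"
  have d: "d > 0" using mu b Q T by (simp add: d_def)
  have dM: "b * b * (d * Q) * T = mu / 2" using b Q T by (simp add: d_def field_simps)
  define V where "V = phase_dom A \<inter> ball (ss, 0) d"
  have nV: "nbhd A (ss, 0) V" unfolding V_def using d by (intro nbhd_ballI o0)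
  have "\<exists>x. is_solution A b sg g p T x \<and> x 0 \<in> W \<and> (\<exists>k. x (real k * T) \<notin> V)"
    if W: "nbhd A (ss, 0) W" for W
  proof -
    obtain e where e: "e > 0" "\<And>z. z \<in> phase_dom A \<Longrightarrow> dist (ss, 0) z < e \<Longrightarrow> z \<in> W"
      using nbhd_ball[OF W] by blast
    define i0 where "i0 = min (e / 2) (d / 2)"
    have i0: "0 < i0" "i0 < e" "i0 < d" using e d by (auto simp: i0_def)
    have pd0: "(ss, i0) \<in> phase_dom A" using ss i0 by (simp add: phase_dom_def)
    obtain x where x: "is_solution A b sg g p T x" "x 0 = (ss, i0)" using exists_solution[OF pd0] by blast
    have xW: "x 0 \<in> W" using e(2)[OF pd0] i0 x(2) by (simp add: dist_Pair_Pair)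
    have x0': "x (real 0 * T) = (ss, i0)" using x(2) by simp
    have pdk: "x (real k * T) \<in> phase_dom A" for k using sol_pd[OF x(1)] x(2) pd0 by simp
    have sk: "fst (x (real k * T)) > 0" for k
      by (induction k) (use x0' ss step_z_lower(1)[OF x(1) pdk] in auto)
    have "\<exists>k. x (real k * T) \<notin> V"
    proof (rule ccontr)
      assume "\<not> (\<exists>k. x (real k * T) \<notin> V)"
      then have inV: "x (real k * T) \<in> V" for k by blast
      have ik: "snd (x (real k * T)) < d" for k
        using inV[of k] dist_snd_ge[of "(ss, 0)" "x (real k * T)"] by (auto simp: V_def)
      define P where "P k = snd (x (real k * T)) * exp (b * ln (fst (x (real k * T))))" for k
      define ka where "ka = mu / 2"
      have ka: "ka > 0" using mu by (simp add: ka_def)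
      have Pstep: "P (Suc k) \<ge> exp ka * P k" for k
      proof -
        have "snd (x t) \<le> d * Q" if "real k * T < t" "t < real (Suc k) * T" for t
        proof -
          have "snd (x t) \<le> snd (x (real k * T)) * Q"
            using step_i_upper[OF x(1) pdk less_imp_le[OF that(1)] that(2)] by (simp add: Q_def)
          also have "\<dots> \<le> d * Q" using ik[of k] Q by simp
          finally show ?thesis .
        qed
        then have "P (Suc k) \<ge> exp (mu - b * b * (d * Q) * T) * P k"
          unfolding P_def by (rule step_P(2)[OF x(1) pdk sk])
        moreover have "mu - b * b * (d * Q) * T = ka"
        proof -
          have gen: "\<And>m::real. m - m / 2 = m / 2" by simp
          show ?thesis unfolding dM ka_def by (rule gen)
        qed
        ultimately show ?thesis by simp
      qed
      have Pk: "P k \<ge> exp (real k * ka) * P 0" for k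
      proof (induction k)
        case 0 then show ?case by simp
      next
        case (Suc k)
        have "exp (real (Suc k) * ka) * P 0 = exp ka * (exp (real k * ka) * P 0)"
          by (simp add: algebra_simps flip: exp_add)
        also have "\<dots> \<le> exp ka * P k" using Suc by simp
        also have "\<dots> \<le> P (Suc k)" by (rule Pstep)
        finally show ?case .
      qed
      have P0: "P 0 > 0" using x0' ss i0 by (simp add: P_def)
      define B where "B = d * exp (b * ln A)"
      have Pb: "P k \<le> B" for k
      proof -
        have h: "0 \<le> snd (x (real k * T))" "fst (x (real k * T)) \<le> A" using pdk[of k] unfolding phase_dom_def by auto
        have "exp (b * ln (fst (x (real k * T)))) \<le> exp (b * ln A)" by (rule pw_mono[OF sk h(2)])
        then show ?thesis unfolding P_def B_def using ik[of k] h(1)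
          by (intro mult_mono) auto
      qed
      obtain k :: nat where k: "B / (ka * P 0) < real k" using reals_Archimedean2 by blast
      have "1 + real k * ka \<le> exp (real k * ka)" by simp
      then have "(1 + real k * ka) * P 0 \<le> B" using Pk[of k] Pb[of k] P0
        by (smt (verit, ccfv_SIG) mult_right_mono)
      moreover have "B < real k * ka * P 0" using k ka P0 by (simp add: field_simps)
      ultimately show False using P0 by (simp add: algebra_simps)
    qed
    then show ?thesis using x xW by blast
  qed
  then show ?thesis unfolding is_stable_def ss_def[symmetric] using nV by blast
qed

end

end



context SI begin

context
  assumes E: "(1 - p) * exp (A * T) > 1"
begin

lemma stable_ss:
  assumes mu: "mu < 0"
  shows "is_stable A b sg g p T (1 / zs, 0)"
  unfolding is_stable_def
proof (intro allI impI)
  fix V assume V: "nbhd A (1 / zs, 0) V"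
  define ss where "ss = 1 / zs"
  have ss: "0 < ss" "ss < A" using ss_bounds[OF E] by (auto simp: ss_def)
  have zs0: "zs > 0" using zs_pos[OF E] .
  have zsss: "zs * ss = 1" using zs0 by (simp add: ss_def)
  have o0: "(ss, 0) \<in> phase_dom A" using ss by (simp add: phase_dom_def)
  obtain e0 where e0: "e0 > 0" "\<And>z. z \<in> phase_dom A \<Longrightarrow> dist (ss, 0) z < e0 \<Longrightarrow> z \<in> V"
    using nbhd_ball[OF V] unfolding ss_def by blast
  define \<rho> where "\<rho> = min (zs / 2) (e0 * zs * zs / 8)"
  have \<rho>: "0 < \<rho>" "\<rho> \<le> zs / 2" "\<rho> \<le> e0 * zs * zs / 8" using zs0 e0 by (auto simp: \<rho>_def)
  have A1: "z > 0 \<and> \<bar>1 / z - ss\<bar> < e0 / 2" if "\<bar>z - zs\<bar> \<le> \<rho>" for z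
  proof -
    have zb: "z \<ge> zs / 2" using that \<rho> by linarith
    then have zp: "z > 0" using zs0 by linarith
    have "\<bar>1 / z - ss\<bar> = \<bar>zs - z\<bar> / (z * zs)" using zp zs0 by (simp add: ss_def field_simps)
    also have "\<dots> \<le> \<rho> / (z * zs)" using that zp zs0 by (intro divide_right_mono) (auto simp: abs_minus_commute)
    also have "\<dots> \<le> \<rho> / (zs / 2 * zs)" using zb zp zs0 \<rho> by (intro divide_left_mono mult_right_mono) auto
    also have "\<dots> \<le> (e0 * zs * zs / 8) / (zs / 2 * zs)" using \<rho> zs0 by (intro divide_right_mono) auto
    also have "\<dots> = e0 / 4" using zs0 by (simp add: field_simps)
    also have "\<dots> < e0 / 2" using e0 by simp
    finally show ?thesis using zp by simp
  qed
  define gM where "gM M = (1 / (A - b * M) + (zs + \<rho> - 1 / (A - b * M)) * exp (- (A - b * M) * T)) / (1 - p)" for M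
  have gM0: "gM 0 = zs + al * \<rho>"
  proof -
    have "gM 0 = al * (zs + \<rho>) + be0" unfolding gM_def using phi_eq[of "zs + \<rho>"] by simp
    then show ?thesis using zs_fix[OF E] by (simp add: algebra_simps)
  qed
  have "isCont gM 0" unfolding gM_def using A p1 by (intro continuous_intros) auto
  then have "gM \<midarrow>0\<rightarrow> gM 0" by (simp add: isCont_def)
  moreover have r: "(1 - al) * \<rho> > 0" using al_lt1[OF E] \<rho> by simp
  ultimately obtain sd where sd: "sd > 0" "\<And>M. M \<noteq> 0 \<Longrightarrow> norm (M - 0) < sd \<Longrightarrow> norm (gM M - gM 0) < (1 - al) * \<rho>"
    unfolding LIM_eq by blast
  define M0 where "M0 = min (sd / 2) (A / (2 * b))"
  have M0: "M0 > 0" "b * M0 < A" using sd A b by (auto simp: M0_def min_def field_simps)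
  have gM1: "gM M0 < zs + \<rho>"
  proof -
    have "\<bar>gM M0 - gM 0\<bar> < (1 - al) * \<rho>" using sd(2)[of M0] M0 sd by (simp add: M0_def)
    then show ?thesis using gM0 by (simp add: algebra_simps)
  qed
  define Q where "Q = exp (b * A * T)"
  have Q: "Q > 0" by (simp add: Q_def)
  have zr: "0 < zs - \<rho>" using \<rho> zs0 by linarith
  define C where "C = exp (b * ln (1 / (zs - \<rho>))) / exp (b * ln (1 / (zs + \<rho>)))"
  have C: "C > 0" by (simp add: C_def)
  define \<eta> where "\<eta> = min (min (ss / 2) (\<rho> * ss * ss / 2)) (min (M0 / (C * Q)) (min (e0 / (2 * C)) e0))"
  have \<eta>: "\<eta> > 0" "\<eta> \<le> ss / 2" "\<eta> \<le> \<rho> * ss * ss / 2" "\<eta> \<le> M0 / (C * Q)" "\<eta> \<le> e0 / (2 * C)" "\<eta> \<le> e0"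
  proof -
    have "ss / 2 > 0" "\<rho> * ss * ss / 2 > 0" "M0 / (C * Q) > 0" "e0 / (2 * C) > 0"
      using ss \<rho> M0 C Q e0 by auto
    then show "\<eta> > 0" using e0 unfolding \<eta>_def by auto
  next
    show "\<eta> \<le> ss / 2" unfolding \<eta>_def by (rule min.coboundedI1, rule min.coboundedI1, rule order_refl)
    show "\<eta> \<le> \<rho> * ss * ss / 2" unfolding \<eta>_def by (rule min.coboundedI1, rule min.coboundedI2, rule order_refl)
    show "\<eta> \<le> M0 / (C * Q)" unfolding \<eta>_def by (rule min.coboundedI2, rule min.coboundedI1, rule order_refl)
    show "\<eta> \<le> e0 / (2 * C)" unfolding \<eta>_def by (rule min.coboundedI2, rule min.coboundedI2, rule min.coboundedI1, rule order_refl)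
    show "\<eta> \<le> e0" unfolding \<eta>_def by (rule min.coboundedI2, rule min.coboundedI2, rule min.coboundedI2, rule order_refl)
  qed
  define W where "W = phase_dom A \<inter> ball (ss, 0) \<eta>"
  have "nbhd A (ss, 0) W" unfolding W_def by (rule nbhd_ballI[OF o0 \<eta>(1)])
  moreover have WV: "W \<subseteq> V" using e0(2) \<eta>(6) by (auto simp: W_def)
  moreover have "\<forall>x. is_solution A b sg g p T x \<and> x 0 \<in> W \<longrightarrow> (\<forall>k. x (real k * T) \<in> V)"
  proof (intro allI impI)
    fix x k assume xs: "is_solution A b sg g p T x \<and> x 0 \<in> W"
    then have x: "is_solution A b sg g p T x" "x 0 \<in> phase_dom A" "dist (ss, 0) (x 0) < \<eta>"
      by (auto simp: W_def)
    have x0': "x (real 0 * T) = x 0" by simp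
    have pdk: "x (real k * T) \<in> phase_dom A" for k using sol_pd[OF x(1) x(2)] .
    have d1: "\<bar>ss - fst (x 0)\<bar> < \<eta>" using dist_fst_ge[of "(ss, 0)" "x 0"] x(3) by simp
    have d2: "\<bar>0 - snd (x 0)\<bar> < \<eta>" using dist_snd_ge[of "(ss, 0)" "x 0"] x(3) by simp
    have s0: "fst (x 0) > ss / 2" using d1 \<eta> by linarith
    have i0: "0 \<le> snd (x 0)" "snd (x 0) < \<eta>" using x(2) d2 unfolding phase_dom_def by auto
    have sk: "fst (x (real k * T)) > 0" for k
      by (induction k) (use s0 ss step_z_lower(1)[OF x(1) pdk] in auto)
    define z where "z k = 1 / fst (x (real k * T))" for k
    have zpos: "z k > 0" for k using sk[of k] by (simp add: z_def)
    have z0: "\<bar>z 0 - zs\<bar> \<le> \<rho>"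
    proof -
      have sp: "fst (x 0) > 0" using s0 ss by linarith
      have zss: "zs = 1 / ss" by (simp add: ss_def)
      have "z 0 - zs = (ss - fst (x 0)) / (fst (x 0) * ss)"
        unfolding z_def zss using sp ss by (simp add: field_simps)
      then have "\<bar>z 0 - zs\<bar> = \<bar>ss - fst (x 0)\<bar> / (fst (x 0) * ss)"
        using sp ss by (simp add: abs_divide abs_mult)
      also have "\<dots> \<le> \<eta> / (fst (x 0) * ss)" using d1 s0 ss by (intro divide_right_mono) auto
      also have "\<dots> \<le> \<eta> / (ss / 2 * ss)" using s0 ss \<eta> by (intro divide_left_mono mult_right_mono) auto
      also have "\<dots> \<le> (\<rho> * ss * ss / 2) / (ss / 2 * ss)" using \<eta> ss by (intro divide_right_mono) auto
      also have "\<dots> = \<rho>" using ss by (simp add: field_simps)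
      finally show ?thesis .
    qed
    define P where "P k = snd (x (real k * T)) * exp (b * ln (fst (x (real k * T))))" for k
    have Pk: "P k \<le> P 0" for k
    proof (induction k)
      case 0 then show ?case by simp
    next
      case (Suc k)
      have "P (Suc k) \<le> exp mu * P k" unfolding P_def by (rule step_P(1)[OF x(1) pdk sk])
      also have "\<dots> \<le> 1 * P k"
      proof (rule mult_right_mono)
        show "exp mu \<le> 1" using mu by simp
        show "0 \<le> P k" using pdk[of k] unfolding P_def phase_dom_def by auto
      qed
      finally show ?case using Suc by simp
    qed
    have ibound: "snd (x (real k * T)) \<le> snd (x 0) * C" if "\<bar>z k - zs\<bar> \<le> \<rho>" for k
    proof -
      have zle: "z k \<le> zs + \<rho>" using that by (simp add: abs_le_iff)
      have "1 / (zs + \<rho>) \<le> 1 / z k"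
        by (rule divide_left_mono[OF zle]) (use zpos[of k] zr \<rho> in auto)
      then have sk1: "fst (x (real k * T)) \<ge> 1 / (zs + \<rho>)" by (simp add: z_def)
      have zge: "zs - \<rho> \<le> z 0" using z0 by (simp add: abs_le_iff)
      have "1 / z 0 \<le> 1 / (zs - \<rho>)"
        by (rule divide_left_mono[OF zge]) (use zpos[of 0] zr in auto)
      then have s01: "fst (x 0) \<le> 1 / (zs - \<rho>)" by (simp add: z_def)
      have e1: "exp (b * ln (fst (x (real k * T)))) \<ge> exp (b * ln (1 / (zs + \<rho>)))"
        by (rule pw_mono[OF _ sk1]) (use zr \<rho> in simp)
      have e2: "exp (b * ln (fst (x 0))) \<le> exp (b * ln (1 / (zs - \<rho>)))"
        by (rule pw_mono[OF _ s01]) (use s0 ss in simp)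
      have "snd (x (real k * T)) * exp (b * ln (1 / (zs + \<rho>))) \<le> snd (x (real k * T)) * exp (b * ln (fst (x (real k * T))))"
        using pdk[of k] e1 unfolding phase_dom_def by (intro mult_left_mono) auto
      also have "\<dots> \<le> snd (x 0) * exp (b * ln (fst (x 0)))" using Pk[of k] by (simp add: P_def)
      also have "\<dots> \<le> snd (x 0) * exp (b * ln (1 / (zs - \<rho>)))" using e2 i0 by (intro mult_left_mono) auto
      finally show ?thesis unfolding C_def by (simp add: field_simps)
    qed
    have zk: "\<bar>z k - zs\<bar> \<le> \<rho>" for k
    proof (induction k)
      case 0 then show ?case using z0 .
    next
      case (Suc k)
      have seg: "snd (x t) \<le> M0" if "real k * T < t" "t < real (Suc k) * T" for t
      proof -
        have "snd (x t) \<le> snd (x (real k * T)) * Q"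
          using step_i_upper[OF x(1) pdk less_imp_le[OF that(1)] that(2)] by (simp add: Q_def)
        also have "\<dots> \<le> snd (x 0) * C * Q" using ibound[OF Suc] Q by (simp add: mult_right_mono)
        also have "\<dots> \<le> \<eta> * C * Q" using i0 C Q by (simp add: mult_right_mono)
        also have "\<dots> \<le> M0"
        proof -
          have "\<eta> * (C * Q) \<le> M0" using \<eta>(4) C Q by (simp add: pos_le_divide_eq)
          then show ?thesis by (simp add: mult.assoc)
        qed
        finally show ?thesis .
      qed
      have up: "z (Suc k) \<le> (1 / (A - b * M0) + (z k - 1 / (A - b * M0)) * exp (- (A - b * M0) * T)) / (1 - p)"
        unfolding z_def by (rule step_z_upper[OF x(1) pdk sk _ M0(2) seg]) (use M0 in auto)
      also have "\<dots> \<le> gM M0"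
        unfolding gM_def using Suc p1 by (intro divide_right_mono add_left_mono mult_right_mono diff_right_mono) auto
      finally have "z (Suc k) < zs + \<rho>" using gM1 by simp
      moreover have "z (Suc k) \<ge> al * z k + be0"
        using step_z_lower(2)[OF x(1) pdk sk, of k] unfolding phi_eq z_def by simp
      moreover have "al * z k + be0 = zs + al * (z k - zs)" using zs_fix[OF E] by (simp add: algebra_simps)
      moreover have "al * (z k - zs) \<ge> - \<rho>"
      proof -
        have "\<bar>al * (z k - zs)\<bar> \<le> 1 * \<rho>" unfolding abs_mult
          using al_pos al_lt1[OF E] Suc by (intro mult_mono) auto
        then show ?thesis by simp
      qed
      ultimately show ?case by simp
    qed
    have "\<bar>ss - fst (x (real k * T))\<bar> < e0 / 2" using A1[OF zk[of k]] unfolding z_def by (simp add: abs_minus_commute)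
    moreover have "\<bar>0 - snd (x (real k * T))\<bar> < e0 / 2"
    proof -
      have "snd (x (real k * T)) \<le> snd (x 0) * C" by (rule ibound[OF zk])
      also have "\<dots> < \<eta> * C" using i0 C by simp
      also have "\<dots> \<le> e0 / 2"
      proof -
        have "\<eta> * (2 * C) \<le> e0" using \<eta>(5) C by (simp add: pos_le_divide_eq)
        then show ?thesis by (simp add: algebra_simps)
      qed
      finally show ?thesis using pdk[of k] unfolding phase_dom_def by auto
    qed
    ultimately have "dist (ss, 0) (x (real k * T)) < e0"
      using dist_pair_le[of ss 0 "fst (x (real k * T))" "snd (x (real k * T))"] by simp
    then show "x (real k * T) \<in> V" using e0(2)[OF pdk] by simp
  qed
  ultimately show "\<exists>W. nbhd A (1 / zs, 0) W \<and> W \<subseteq> V \<and>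
      (\<forall>x. is_solution A b sg g p T x \<and> x 0 \<in> W \<longrightarrow> (\<forall>k. x (real k * T) \<in> V))"
    unfolding ss_def by blast
qed

end

end



theorem corollary2:
  fixes A beta0 sg g p T :: real
  assumes "0 < A" "A \<le> 1" "beta0 > 0" "sg \<ge> 0" "g \<ge> 0" "sg + g > 0"
    and "0 < p" "p < 1" "T > 0"
    and "A > Sc beta0 sg g"
  shows
    "(T < T1 A p \<longrightarrow>
        (\<forall>x. is_solution A beta0 sg g p T x \<and> x 0 \<in> phase_dom A \<and> is_T_periodic T x
              \<longrightarrow> (\<forall>t\<ge>0. x t = (0, 0))) \<and>
        is_stable A beta0 sg g p T (0, 0)) \<and>
     (T1 A p < T \<and> T < T2 A beta0 sg g p \<longrightarrow>
        is_solution A beta0 sg g p T (\<lambda>t. (calS A p T t, 0)) \<and>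
        is_stable A beta0 sg g p T (calS A p T 0, 0) \<and>
        \<not> is_stable A beta0 sg g p T (0, 0)) \<and>
     (T > T2 A beta0 sg g p \<longrightarrow>
        is_solution A beta0 sg g p T (\<lambda>t. (calS A p T t, 0)) \<and>
        \<not> is_stable A beta0 sg g p T (calS A p T 0, 0) \<and>
        \<not> is_stable A beta0 sg g p T (0, 0))"
proof -
  interpret SI A beta0 sg g p T by unfold_locales (use assms in auto)
  have A: "0 < A" and b: "0 < beta0" and c: "0 < sg + g" and p1: "p < 1" and p0: "0 < p" and T: "0 < T"
    using assms by auto
  define l where "l = - ln (1 - p)"
  have l: "l > 0" using p0 p1 by (simp add: l_def)
  have el: "exp (- l) = 1 - p" using p1 by (simp add: l_def)
  have T1: "T1 A p = l / A" using p0 p1 by (simp add: T1_def l_def)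
  define S where "S = Sc beta0 sg g"
  have S: "0 < S" "S < A" "beta0 * S = sg + g" using assms by (auto simp: S_def Sc_def)
  have T2: "T2 A beta0 sg g p = l / (A - S)" using p0 p1 by (simp add: T2_def l_def S_def)
  have Eeq: "(1 - p) * exp (A * T) = exp (A * T - l)"
  proof -
    have "exp (A * T - l) = exp (A * T) * exp (- l)" by (simp flip: exp_add)
    then show ?thesis by (simp add: el mult.commute)
  qed
  have E1: "(1 - p) * exp (A * T) < 1" if "T < T1 A p"
  proof -
    have "A * T < l" using that A T1 by (simp add: field_simps)
    then show ?thesis unfolding Eeq by simp
  qed
  have E2: "(1 - p) * exp (A * T) > 1" if "T1 A p < T"
  proof -
    have "l < A * T" using that A T1 by (simp add: field_simps)
    then show ?thesis unfolding Eeq by simp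
  qed
  have mueq: "(beta0 * A - (sg + g)) * T + beta0 * ln (1 - p) = beta0 * ((A - S) * T - l)"
  proof -
    have "beta0 * ((A - S) * T - l) = (beta0 * A - beta0 * S) * T - beta0 * l" by (simp add: algebra_simps)
    then show ?thesis unfolding S(3) by (simp add: l_def)
  qed
  have M1: "(beta0 * A - (sg + g)) * T + beta0 * ln (1 - p) < 0" if "T < T2 A beta0 sg g p"
  proof -
    have "(A - S) * T < l" using that S T2 by (simp add: field_simps)
    then show ?thesis unfolding mueq using b by (simp add: mult_pos_neg)
  qed
  have M2: "(beta0 * A - (sg + g)) * T + beta0 * ln (1 - p) > 0" if "T2 A beta0 sg g p < T"
  proof -
    have "l < (A - S) * T" using that S T2 by (simp add: field_simps)
    then show ?thesis unfolding mueq using b by simp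
  qed
  have T12: "T1 A p < T2 A beta0 sg g p"
    unfolding T1 T2 using l S A by (simp add: frac_less2)
  have KK: "exp (A * T) * (1 - p) - 1 > 0" if "1 < (1 - p) * exp (A * T)" using that by (simp add: mult.commute)
  have part1: "T < T1 A p \<longrightarrow>
        (\<forall>x. is_solution A beta0 sg g p T x \<and> x 0 \<in> phase_dom A \<and> is_T_periodic T x
              \<longrightarrow> (\<forall>t\<ge>0. x t = (0, 0))) \<and>
        is_stable A beta0 sg g p T (0, 0)"
  proof (intro impI conjI)
    assume h: "T < T1 A p"
    show "\<forall>x. is_solution A beta0 sg g p T x \<and> x 0 \<in> phase_dom A \<and> is_T_periodic T x
              \<longrightarrow> (\<forall>t\<ge>0. x t = (0, 0))"
    proof (intro allI impI)
      fix x :: "real \<Rightarrow> real \<times> real" and t :: real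
      assume "is_solution A beta0 sg g p T x \<and> x 0 \<in> phase_dom A \<and> is_T_periodic T x" "0 \<le> t"
      then show "x t = (0, 0)" using case1_periodic[OF E1[OF h]] by blast
    qed
    show "is_stable A beta0 sg g p T (0, 0)" using case1_stable E1[OF h] by simp
  qed
  have part2: "T1 A p < T \<and> T < T2 A beta0 sg g p \<longrightarrow>
        is_solution A beta0 sg g p T (\<lambda>t. (calS A p T t, 0)) \<and>
        is_stable A beta0 sg g p T (calS A p T 0, 0) \<and>
        \<not> is_stable A beta0 sg g p T (0, 0)"
  proof (intro impI conjI)
    assume h: "T1 A p < T \<and> T < T2 A beta0 sg g p"
    note E = E2[OF conjunct1[OF h]]
    show "is_solution A beta0 sg g p T (\<lambda>t. (calS A p T t, 0))" by (rule calS_solution[OF KK[OF E]])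
    show "is_stable A beta0 sg g p T (calS A p T 0, 0)"
      unfolding calS0[OF E] by (rule stable_ss[OF E M1[OF conjunct2[OF h]]])
    show "\<not> is_stable A beta0 sg g p T (0, 0)" by (rule unstable00[OF E])
  qed
  have part3: "T > T2 A beta0 sg g p \<longrightarrow>
        is_solution A beta0 sg g p T (\<lambda>t. (calS A p T t, 0)) \<and>
        \<not> is_stable A beta0 sg g p T (calS A p T 0, 0) \<and>
        \<not> is_stable A beta0 sg g p T (0, 0)"
  proof (intro impI conjI)
    assume h: "T > T2 A beta0 sg g p"
    have "T1 A p < T" using h T12 by simp
    note E = E2[OF this]
    show "is_solution A beta0 sg g p T (\<lambda>t. (calS A p T t, 0))" by (rule calS_solution[OF KK[OF E]])
    show "\<not> is_stable A beta0 sg g p T (calS A p T 0, 0)"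
      unfolding calS0[OF E] by (rule unstable_ss[OF E M2[OF h]])
    show "\<not> is_stable A beta0 sg g p T (0, 0)" by (rule unstable00[OF E])
  qed
  show ?thesis using part1 part2 part3 by blast
qed

end
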